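(* Let $R=k[x_1,\dots,x_n]$ be a standard graded polynomial ring over a field $k$, $I\subseteq R$ a homogeneous ideal and $(F_\bullet,d_\bullet)$ a homogeneous free resolution of $R/I$ with $F_0=R$. Write $F_1=F_1'\oplus\bigoplus_{i=1}^tRe_0^i$ where each $e_0^i$ generates a free direct summand, and write $d_2=d_2'+d_0^1+\cdots+d_0^t$ with $d_2':F_2\to F_1'$ and $d_0^i:F_2\to Re_0^i$ the components. For each $i$ let $\mathfrak a_i$ be a homogeneous ideal with $d_0^i(F_2)\subseteq\mathfrak a_ie_0^i$ and $(G^i_\bullet,m^i_\bullet)$ a homogeneous free resolution of $R/\mathfrak a_i$ with $G^i_0=R$. Let $K'=d_1(F_1')$, $K_0^i=(d_1(e_0^i))$ and $J=K'+\mathfrak a_1K_0^1+\cdots+\mathfrak a_tK_0^t$. For each $i$ let $(d_0^i)':F_2\to R$ be $d_0^i$ followed by $e_0^i\mapsto1$, and let $q^i_1:F_2\to G^i_1$, $q^i_k:F_{k+1}\to G^i_k$ ($k\ge2$) be homomorphisms with $m^i_1q^i_1=(d^i_0)'$ and $m^i_kq^i_k=q^i_{k-1}d_{k+1}$. Let $T_\bullet$ be the complex $\cdots\to F_3\xrightarrow{d_3}F_2\xrightarrow{d_2'}F_1'$ (with $F_1'$ in degree $0$, $F_i$ in degree $i-1$), and $B_\bullet$ the complex $\cdots\to\bigoplus_iG^i_2\xrightarrow{\oplus m_2^i}\bigoplus_iG^i_1\xrightarrow{\beta}R$ with $\beta(g_1,\dots,g_t)=-\sum_{i=1}^tm^i_1(g_i)\,d_1(e^i_0)$.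 Then $d_1|_{F_1'}:F_1'\to R$ together with the maps $(q^1_{k-1},\dots,q^t_{k-1})^T:F_k\to\bigoplus_iG^i_{k-1}$ ($k\ge2$) form a morphism of complexes $T_\bullet\to B_\bullet$ whose mapping cone is a free resolution of $R/J$.
   Context: The mapping cone has $R$ in degree $0$, $F_1'\oplus\bigoplus_iG^i_1$ in degree $1$, and $F_k\oplus\bigoplus_iG^i_k$ in degree $k\ge2$. It is called the iterated trimming complex. *)

theory Defs
  imports Main "HOL-Library.Poly_Mapping"
begin

text \<open>R = k[x_1,...,x_n] is modelled as finitely supported maps from monomials
  (exponent vectors 'v =>0 nat, with 'v a finite type of n variables) to coefficients in k.\<close>

type_synonym ('v, 'k) mpoly = "('v \<Rightarrow>\<^sub>0 nat) \<Rightarrow>\<^sub>0 'k"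

definition mon_deg :: "('v \<Rightarrow>\<^sub>0 nat) \<Rightarrow> nat" where
  "mon_deg m = (\<Sum>v\<in>Poly_Mapping.keys m. Poly_Mapping.lookup m v)"

text \<open>p is homogeneous of degree e (standard grading, every variable of degree 1);
  the zero polynomial is homogeneous of every degree, and only 0 is homogeneous of negative degree.\<close>
definition homog_of_deg :: "int \<Rightarrow> ('v, 'k::zero) mpoly \<Rightarrow> bool" where
  "homog_of_deg e p \<longleftrightarrow> (\<forall>m\<in>Poly_Mapping.keys p. int (mon_deg m) = e)"

definition is_ideal :: "'r::comm_ring_1 set \<Rightarrow> bool" where
  "is_ideal I \<longleftrightarrow> 0 \<in> I \<and> (\<forall>x\<in>I. \<forall>y\<in>I. x + y \<in> I) \<and> (\<forall>r. \<forall>x\<in>I. r * x \<in> I)"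

definition ideal_gen :: "'r::comm_ring_1 set \<Rightarrow> 'r set" where
  "ideal_gen S = \<Inter>{I. is_ideal I \<and> S \<subseteq> I}"

definition ideal_prod :: "'r::comm_ring_1 set \<Rightarrow> 'r set \<Rightarrow> 'r set" where
  "ideal_prod A B = ideal_gen {a * b |a b. a \<in> A \<and> b \<in> B}"

definition homog_ideal :: "('v, 'k::comm_ring_1) mpoly set \<Rightarrow> bool" where
  "homog_ideal I \<longleftrightarrow> is_ideal I \<and> I = ideal_gen {p \<in> I. \<exists>e. homog_of_deg e p}"

text \<open>A free module with basis indexed by the set B (of some index type 'b) is
  the module of finitely supported coordinate vectors v :: 'b => R vanishing off B.
  A homomorphism out of it is given by the images D j of the basis vectors e_j;
  D j i is the coefficient of the basis vector e_i of the target in D(e_j).\<close>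

definition fvec :: "'b set \<Rightarrow> ('b \<Rightarrow> 'r::comm_ring_1) set" where
  "fvec B = {v. finite {j. v j \<noteq> 0} \<and> (\<forall>j. j \<notin> B \<longrightarrow> v j = 0)}"

definition lapply :: "('b \<Rightarrow> 'c \<Rightarrow> 'r::comm_ring_1) \<Rightarrow> ('b \<Rightarrow> 'r) \<Rightarrow> 'c \<Rightarrow> 'r" where
  "lapply D v = (\<lambda>i. \<Sum>j\<in>{j. v j \<noteq> 0}. v j * D j i)"

definition is_hom :: "'b set \<Rightarrow> 'c set \<Rightarrow> ('b \<Rightarrow> 'c \<Rightarrow> 'r::comm_ring_1) \<Rightarrow> bool" where
  "is_hom B C D \<longleftrightarrow> (\<forall>j\<in>B. D j \<in> fvec C)"

definition free_complex :: "(nat \<Rightarrow> 'b set) \<Rightarrow> (nat \<Rightarrow> 'b \<Rightarrow> 'b \<Rightarrow> 'r::comm_ring_1) \<Rightarrow> bool" where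
  "free_complex B D \<longleftrightarrow>
     (\<forall>n\<ge>1. is_hom (B n) (B (n - 1)) (D n)) \<and>
     (\<forall>n\<ge>1. \<forall>v\<in>fvec (B (Suc n)). lapply (D n) (lapply (D (Suc n)) v) = (\<lambda>_. 0))"

text \<open>A free resolution of R/I with 0-th module R (basis a single element b0,
  augmentation the canonical map R -> R/I): a complex, exact in all degrees n >= 1,
  with image of D 1 equal to I.\<close>

definition free_res :: "(nat \<Rightarrow> 'b set) \<Rightarrow> (nat \<Rightarrow> 'b \<Rightarrow> 'b \<Rightarrow> 'r::comm_ring_1) \<Rightarrow> 'r set \<Rightarrow> bool" where
  "free_res B D I \<longleftrightarrow> free_complex B D \<and>
     (\<exists>b0. B 0 = {b0} \<and> {lapply (D 1) v b0 |v. v \<in> fvec (B 1)} = I) \<and>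
     (\<forall>n\<ge>1. {v \<in> fvec (B n). lapply (D n) v = (\<lambda>_. 0)} = lapply (D (Suc n)) ` fvec (B (Suc n)))"

text \<open>Homogeneous (graded) free resolution: in addition each basis element carries a degree
  (the 0-th module being R = R(0)) and all differentials are homogeneous of degree 0.\<close>

definition homog_free_res :: "(nat \<Rightarrow> 'b set) \<Rightarrow> (nat \<Rightarrow> 'b \<Rightarrow> 'b \<Rightarrow> ('v, 'k::comm_ring_1) mpoly)
     \<Rightarrow> ('v, 'k) mpoly set \<Rightarrow> bool" where
  "homog_free_res B D I \<longleftrightarrow> free_res B D I \<and>
     (\<exists>deg :: nat \<Rightarrow> 'b \<Rightarrow> int. (\<forall>b\<in>B 0. deg 0 b = 0) \<and>
        (\<forall>n\<ge>1. \<forall>j\<in>B n. \<forall>i\<in>B (n - 1). homog_of_deg (deg n j - deg (n - 1) i) (D n j i)))"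

definition chain_map :: "(nat \<Rightarrow> 'a set) \<Rightarrow> (nat \<Rightarrow> 'a \<Rightarrow> 'a \<Rightarrow> 'r::comm_ring_1)
    \<Rightarrow> (nat \<Rightarrow> 'b set) \<Rightarrow> (nat \<Rightarrow> 'b \<Rightarrow> 'b \<Rightarrow> 'r) \<Rightarrow> (nat \<Rightarrow> 'a \<Rightarrow> 'b \<Rightarrow> 'r) \<Rightarrow> bool" where
  "chain_map BT DT BB DB phi \<longleftrightarrow>
     (\<forall>n. is_hom (BT n) (BB n) (phi n)) \<and>
     (\<forall>n\<ge>1. \<forall>v\<in>fvec (BT n). lapply (phi (n - 1)) (lapply (DT n) v) = lapply (DB n) (lapply (phi n) v))"

text \<open>Mapping cone: Cone_n = T_{n-1} (+) B_n (T_{-1} = 0), differential (a,b) |-> (-d a, phi a + d b).\<close>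

definition cone_basis :: "(nat \<Rightarrow> 'a set) \<Rightarrow> (nat \<Rightarrow> 'b set) \<Rightarrow> nat \<Rightarrow> ('a + 'b) set" where
  "cone_basis BT BB n = (if n = 0 then {} else Inl ` BT (n - 1)) \<union> Inr ` BB n"

definition cone_diff :: "(nat \<Rightarrow> 'a \<Rightarrow> 'a \<Rightarrow> 'r::comm_ring_1) \<Rightarrow> (nat \<Rightarrow> 'b \<Rightarrow> 'b \<Rightarrow> 'r)
    \<Rightarrow> (nat \<Rightarrow> 'a \<Rightarrow> 'b \<Rightarrow> 'r) \<Rightarrow> nat \<Rightarrow> 'a + 'b \<Rightarrow> 'a + 'b \<Rightarrow> 'r" where
  "cone_diff DT DB phi n c c' =
     (case c of
        Inl a \<Rightarrow> (case c' of Inl a' \<Rightarrow> (if n \<le> 1 then 0 else - DT (n - 1) a a')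
                            | Inr b' \<Rightarrow> phi (n - 1) a b')
      | Inr b \<Rightarrow> (case c' of Inl _ \<Rightarrow> 0 | Inr b' \<Rightarrow> DB n b b'))"

text \<open>The resolution F uses basis indices nat; F_0 = R has basis {0}; the elements e_0^i
  (i = 1..t) are the basis elements e0 i of F_1, and F_1' is spanned by the remaining ones.\<close>

text \<open>T: T_0 = F_1', T_n = F_{n+1}; differentials d_2' (= d_2 followed by projection to F_1') and d_{n+1}.\<close>
definition T_basis :: "(nat \<Rightarrow> nat set) \<Rightarrow> (nat \<Rightarrow> nat) \<Rightarrow> nat \<Rightarrow> nat \<Rightarrow> nat set" where
  "T_basis BF e0 t n = (if n = 0 then BF 1 - e0 ` {1..t} else BF (Suc n))"

definition T_diff :: "(nat \<Rightarrow> nat \<Rightarrow> nat \<Rightarrow> 'r::comm_ring_1) \<Rightarrow> (nat \<Rightarrow> nat) \<Rightarrow> nat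
    \<Rightarrow> nat \<Rightarrow> nat \<Rightarrow> nat \<Rightarrow> 'r" where
  "T_diff dF e0 t n j j' =
     (if n = 0 then 0
      else if n = 1 then (if j' \<in> e0 ` {1..t} then 0 else dF 2 j j')
      else dF (Suc n) j j')"

text \<open>B: B_0 = R (basis {(0,0)}), B_n = (+)_{i=1..t} G^i_n (basis pairs (i,g));
  differential beta in degree 1, (+)_i m^i_n in degree n >= 2.\<close>
definition B_basis :: "(nat \<Rightarrow> nat \<Rightarrow> nat set) \<Rightarrow> nat \<Rightarrow> nat \<Rightarrow> (nat \<times> nat) set" where
  "B_basis BG t n = (if n = 0 then {(0, 0)} else {(i, g). i \<in> {1..t} \<and> g \<in> BG i n})"

definition B_diff :: "(nat \<Rightarrow> nat \<Rightarrow> nat \<Rightarrow> nat \<Rightarrow> 'r::comm_ring_1) \<Rightarrow> (nat \<Rightarrow> nat \<Rightarrow> nat \<Rightarrow> 'r)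
    \<Rightarrow> (nat \<Rightarrow> nat) \<Rightarrow> nat \<Rightarrow> nat \<times> nat \<Rightarrow> nat \<times> nat \<Rightarrow> 'r" where
  "B_diff mG dF e0 n c c' =
     (if n = 0 then 0
      else if n = 1 then (if c' = (0, 0) then - (mG (fst c) 1 (snd c) 0 * dF 1 (e0 (fst c)) 0) else 0)
      else (if fst c = fst c' then mG (fst c) n (snd c) (snd c') else 0))"

text \<open>The morphism: phi_0 = d_1 restricted to F_1' (into R), phi_n = (q^1_n,...,q^t_n)^T : F_{n+1} -> (+)_i G^i_n.\<close>
definition trim_phi :: "(nat \<Rightarrow> nat \<Rightarrow> nat \<Rightarrow> 'r::comm_ring_1) \<Rightarrow> (nat \<Rightarrow> nat \<Rightarrow> nat \<Rightarrow> nat \<Rightarrow> 'r)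
    \<Rightarrow> nat \<Rightarrow> nat \<Rightarrow> nat \<Rightarrow> nat \<times> nat \<Rightarrow> 'r" where
  "trim_phi dF q t n j c' =
     (if n = 0 then (if c' = (0, 0) then dF 1 j 0 else 0)
      else (if fst c' \<in> {1..t} then q (fst c') n j (snd c') else 0))"

definition trim_J :: "(nat \<Rightarrow> nat set) \<Rightarrow> (nat \<Rightarrow> nat \<Rightarrow> nat \<Rightarrow> 'r::comm_ring_1) \<Rightarrow> (nat \<Rightarrow> nat)
    \<Rightarrow> nat \<Rightarrow> (nat \<Rightarrow> 'r set) \<Rightarrow> 'r set" where
  "trim_J BF dF e0 t a =
     {x + (\<Sum>i\<in>{1..t}. y i) |x y.
        x \<in> {lapply (dF 1) v 0 |v. v \<in> fvec (BF 1 - e0 ` {1..t})} \<and>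
        (\<forall>i\<in>{1..t}. y i \<in> ideal_prod (a i) (ideal_gen {dF 1 (e0 i) 0}))}"

end

theory Submission
  imports Defs
begin


lemma fvec_finite: "v \<in> fvec B \<Longrightarrow> finite {j. v j \<noteq> 0}"
  by (simp add: fvec_def)
lemma fvec_out: "v \<in> fvec B \<Longrightarrow> j \<notin> B \<Longrightarrow> v j = 0"
  by (simp add: fvec_def)
lemma fvecI: "finite {j. v j \<noteq> 0} \<Longrightarrow> (\<And>j. j \<notin> B \<Longrightarrow> v j = 0) \<Longrightarrow> v \<in> fvec B"
  by (simp add: fvec_def)

lemma lapply_superset:
  assumes "finite S" "{j. v j \<noteq> 0} \<subseteq> S"
  shows "lapply D v i = (\<Sum>j\<in>S. v j * D j i)"
  unfolding lapply_def
  by (rule sum.mono_neutral_left[OF assms(1) assms(2)]) auto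

lemma lapply_add:
  assumes "finite {j. u j \<noteq> 0}" "finite {j. w j \<noteq> 0}"
  shows "lapply D (\<lambda>j. u j + w j) = (\<lambda>i. lapply D u i + lapply D w i)"
proof
  fix i
  let ?S = "{j. u j \<noteq> 0} \<union> {j. w j \<noteq> 0}"
  have f: "finite ?S" using assms by simp
  have "lapply D (\<lambda>j. u j + w j) i = (\<Sum>j\<in>?S. (u j + w j) * D j i)"
    by (rule lapply_superset[OF f]) auto
  also have "\<dots> = (\<Sum>j\<in>?S. u j * D j i) + (\<Sum>j\<in>?S. w j * D j i)"
    by (simp add: distrib_right sum.distrib)
  also have "\<dots> = lapply D u i + lapply D w i"
    using lapply_superset[OF f, of u D i] lapply_superset[OF f, of w D i] by auto
  finally show "lapply D (\<lambda>j. u j + w j) i = lapply D u i + lapply D w i" .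
qed

lemma lapply_neg:
  "lapply D (\<lambda>j. - u j) = (\<lambda>i. - lapply D u i)"
  by (simp add: lapply_def sum_negf)

lemma lapply_zero: "lapply D (\<lambda>j. 0) = (\<lambda>i. 0)"
  by (simp add: lapply_def)

lemma lapply_zero_fun: "lapply D (\<lambda>j. 0) i = 0"
  by (simp add: lapply_def)

lemma lapply_fvec:
  assumes "is_hom B C D" "v \<in> fvec B"
  shows "lapply D v \<in> fvec C"
proof (rule fvecI)
  have fin: "finite {j. v j \<noteq> 0}" using assms(2) fvec_finite by blast
  have "{i. lapply D v i \<noteq> 0} \<subseteq> (\<Union>j\<in>{j. v j \<noteq> 0}. {i. D j i \<noteq> 0})"
  proof
    fix i assume i: "i \<in> {i. lapply D v i \<noteq> 0}"
    show "i \<in> (\<Union>j\<in>{j. v j \<noteq> 0}. {i. D j i \<noteq> 0})"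
    proof (rule ccontr)
      assume "i \<notin> (\<Union>j\<in>{j. v j \<noteq> 0}. {i. D j i \<noteq> 0})"
      then have "\<forall>j\<in>{j. v j \<noteq> 0}. v j * D j i = 0" by auto
      then have "lapply D v i = 0" unfolding lapply_def by (rule sum.neutral)
      then show False using i by simp
    qed
  qed
  moreover have "finite (\<Union>j\<in>{j. v j \<noteq> 0}. {i. D j i \<noteq> 0})"
  proof (rule finite_UN_I[OF fin])
    fix j assume "j \<in> {j. v j \<noteq> 0}"
    then have "j \<in> B" using fvec_out[OF assms(2)] by blast
    then have "D j \<in> fvec C" using assms(1) unfolding is_hom_def by blast
    then show "finite {i. D j i \<noteq> 0}" by (rule fvec_finite)
  qed
  ultimately show "finite {i. lapply D v i \<noteq> 0}" by (rule finite_subset)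
next
  fix i assume iC: "i \<notin> C"
  have "\<forall>j\<in>{j. v j \<noteq> 0}. v j * D j i = 0"
  proof
    fix j assume "j \<in> {j. v j \<noteq> 0}"
    then have "j \<in> B" using fvec_out[OF assms(2)] by blast
    then have Dj: "D j \<in> fvec C" using assms(1) unfolding is_hom_def by blast
    have "D j i = 0" by (rule fvec_out[OF Dj iC])
    then show "v j * D j i = 0" by simp
  qed
  then show "lapply D v i = 0" unfolding lapply_def by (rule sum.neutral)
qed

lemma fvec_zero: "(\<lambda>j. 0) \<in> fvec B" by (simp add: fvec_def)
lemma fvec_neg: "v \<in> fvec B \<Longrightarrow> (\<lambda>j. - v j) \<in> fvec B" by (simp add: fvec_def)
lemma fvec_add: assumes a: "v \<in> fvec B" "w \<in> fvec B" shows "(\<lambda>j. v j + w j) \<in> fvec B"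
proof (rule fvecI)
  have "{j. v j + w j \<noteq> 0} \<subseteq> {j. v j \<noteq> 0} \<union> {j. w j \<noteq> 0}" by auto
  then show "finite {j. v j + w j \<noteq> 0}" using a fvec_finite by (metis finite_Un finite_subset)
  show "\<And>j. j \<notin> B \<Longrightarrow> v j + w j = 0" using fvec_out[OF a(1)] fvec_out[OF a(2)] by auto
qed

lemma lapply_sum_type:
  assumes "finite {j. v j \<noteq> 0}"
  shows "lapply D v x = lapply (\<lambda>a. D (Inl a)) (\<lambda>a. v (Inl a)) x + lapply (\<lambda>b. D (Inr b)) (\<lambda>b. v (Inr b)) x"
proof -
  let ?L = "{a. v (Inl a) \<noteq> 0}" and ?R = "{b. v (Inr b) \<noteq> 0}"
  have eq: "{j. v j \<noteq> 0} = Inl ` ?L \<union> Inr ` ?R" by (auto, case_tac x, auto)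
  have fL: "finite ?L" using finite_vimageI[OF assms, of Inl] by (simp add: vimage_def)
  have fR: "finite ?R" using finite_vimageI[OF assms, of Inr] by (simp add: vimage_def)
  have "lapply D v x = (\<Sum>j\<in>Inl ` ?L \<union> Inr ` ?R. v j * D j x)" unfolding lapply_def eq ..
  also have "\<dots> = (\<Sum>j\<in>Inl ` ?L. v j * D j x) + (\<Sum>j\<in>Inr ` ?R. v j * D j x)"
    by (rule sum.union_disjoint) (use fL fR in auto)
  also have "\<dots> = lapply (\<lambda>a. D (Inl a)) (\<lambda>a. v (Inl a)) x + lapply (\<lambda>b. D (Inr b)) (\<lambda>b. v (Inr b)) x"
    unfolding lapply_def by (simp add: sum.reindex)
  finally show ?thesis .
qed

lemma cone_apply:
  assumes "finite {j. v j \<noteq> 0}"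
  shows "lapply (cone_diff DT DB phi n) v = (\<lambda>c. case c of
      Inl a' \<Rightarrow> (if n \<le> 1 then 0 else - lapply (DT (n - 1)) (\<lambda>a. v (Inl a)) a')
    | Inr b' \<Rightarrow> lapply (phi (n - 1)) (\<lambda>a. v (Inl a)) b' + lapply (DB n) (\<lambda>b. v (Inr b)) b')"
proof
  fix c
  show "lapply (cone_diff DT DB phi n) v c = (case c of
      Inl a' \<Rightarrow> (if n \<le> 1 then 0 else - lapply (DT (n - 1)) (\<lambda>a. v (Inl a)) a')
    | Inr b' \<Rightarrow> lapply (phi (n - 1)) (\<lambda>a. v (Inl a)) b' + lapply (DB n) (\<lambda>b. v (Inr b)) b')"
    unfolding lapply_sum_type[OF assms]
    by (cases c) (auto simp: cone_diff_def lapply_def sum_negf)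
qed

lemma fvec_join:
  assumes "(\<lambda>a. f (Inl a)) \<in> fvec A" "(\<lambda>b. f (Inr b)) \<in> fvec Bs"
  shows "f \<in> fvec (Inl ` A \<union> Inr ` Bs)"
proof (rule fvecI)
  have "{j. f j \<noteq> 0} = Inl ` {a. f (Inl a) \<noteq> 0} \<union> Inr ` {b. f (Inr b) \<noteq> 0}"
    by (auto, case_tac x, auto)
  then show "finite {j. f j \<noteq> 0}" using assms fvec_finite by (metis finite_Un finite_imageI)
  fix j assume "j \<notin> Inl ` A \<union> Inr ` Bs"
  then show "f j = 0" using fvec_out[OF assms(1)] fvec_out[OF assms(2)] by (cases j) auto
qed

lemma fvec_split:
  assumes "f \<in> fvec (Inl ` A \<union> Inr ` Bs)"
  shows "(\<lambda>a. f (Inl a)) \<in> fvec A" "(\<lambda>b. f (Inr b)) \<in> fvec Bs"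
proof -
  have fin: "finite {j. f j \<noteq> 0}" using assms fvec_finite by blast
  show "(\<lambda>a. f (Inl a)) \<in> fvec A"
    by (rule fvecI) (use finite_vimageI[OF fin, of Inl] in \<open>simp add: vimage_def\<close>,
        use assms fvec_out in force)
  show "(\<lambda>b. f (Inr b)) \<in> fvec Bs"
    by (rule fvecI) (use finite_vimageI[OF fin, of Inr] in \<open>simp add: vimage_def\<close>,
        use assms fvec_out in force)
qed

lemma cone_basis_alt: "cone_basis BT BB m = Inl ` (if m = 0 then {} else BT (m - 1)) \<union> Inr ` BB m"
  by (simp add: cone_basis_def)

lemma cone_complex:
  fixes DT :: "nat \<Rightarrow> 'a \<Rightarrow> 'a \<Rightarrow> 'r::comm_ring_1" and DB :: "nat \<Rightarrow> 'b \<Rightarrow> 'b \<Rightarrow> 'r"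
  assumes T: "free_complex BT DT" and B: "free_complex BB DB" and C: "chain_map BT DT BB DB phi"
  shows "free_complex (cone_basis BT BB) (cone_diff DT DB phi)"
  unfolding free_complex_def is_hom_def
proof (intro conjI allI impI ballI)
  fix n :: nat and c assume n: "1 \<le> n" and c: "c \<in> cone_basis BT BB n"
  show "cone_diff DT DB phi n c \<in> fvec (cone_basis BT BB (n - 1))"
    unfolding cone_basis_alt[of BT BB "n - 1"]
  proof (rule fvec_join)
    show "(\<lambda>a. cone_diff DT DB phi n c (Inl a)) \<in> fvec (if n - 1 = 0 then {} else BT (n - 1 - 1))"
    proof (cases c)
      case (Inl a)
      show ?thesis
      proof (cases "n \<le> 1")
        case True then show ?thesis using Inl by (simp add: cone_diff_def fvec_zero)
      next
        case False
        have "a \<in> BT (n - 1)" using c Inl n by (auto simp: cone_basis_def)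
        moreover have "n - 1 \<ge> 1" using False by simp
        then have "is_hom (BT (n - 1)) (BT (n - 1 - 1)) (DT (n - 1))"
          using T unfolding free_complex_def by blast
        ultimately have "DT (n - 1) a \<in> fvec (BT (n - 1 - 1))" unfolding is_hom_def by blast
        then show ?thesis using Inl False by (simp add: cone_diff_def fvec_neg)
      qed
    next
      case (Inr b) then show ?thesis by (simp add: cone_diff_def fvec_zero)
    qed
    show "(\<lambda>b. cone_diff DT DB phi n c (Inr b)) \<in> fvec (BB (n - 1))"
    proof (cases c)
      case (Inl a)
      have "a \<in> BT (n - 1)" using c Inl n by (auto simp: cone_basis_def)
      then have "phi (n - 1) a \<in> fvec (BB (n - 1))"
        using C unfolding chain_map_def is_hom_def by auto
      then show ?thesis using Inl by (simp add: cone_diff_def)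
    next
      case (Inr b)
      have "b \<in> BB n" using c Inr n by (auto simp: cone_basis_def)
      then have "DB n b \<in> fvec (BB (n - 1))"
        using B n unfolding free_complex_def is_hom_def by auto
      then show ?thesis using Inr by (simp add: cone_diff_def)
    qed
  qed
next
  fix n :: nat and v :: "'a + 'b \<Rightarrow> 'r" assume n: "1 \<le> n" and v: "v \<in> fvec (cone_basis BT BB (Suc n))"
  let ?vl = "\<lambda>a. v (Inl a)" and ?vr = "\<lambda>b. v (Inr b)"
  have vl: "?vl \<in> fvec (BT n)" and vr: "?vr \<in> fvec (BB (Suc n))"
    using fvec_split[OF v[unfolded cone_basis_alt]] by auto
  have hT: "is_hom (BT n) (BT (n - 1)) (DT n)" using T n unfolding free_complex_def by auto
  have hP: "is_hom (BT n) (BB n) (phi n)" using C unfolding chain_map_def by auto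
  have hB: "is_hom (BB (Suc n)) (BB n) (DB (Suc n))" using B unfolding free_complex_def by auto
  have f1: "lapply (DT n) ?vl \<in> fvec (BT (n - 1))" by (rule lapply_fvec[OF hT vl])
  have f2: "lapply (phi n) ?vl \<in> fvec (BB n)" by (rule lapply_fvec[OF hP vl])
  have f3: "lapply (DB (Suc n)) ?vr \<in> fvec (BB n)" by (rule lapply_fvec[OF hB vr])
  define w where "w = lapply (cone_diff DT DB phi (Suc n)) v"
  have wdef: "w = (\<lambda>c. case c of Inl a' \<Rightarrow> - lapply (DT n) ?vl a'
      | Inr b' \<Rightarrow> lapply (phi n) ?vl b' + lapply (DB (Suc n)) ?vr b')"
  proof -
    have "\<not> Suc n \<le> 1" "Suc n - 1 = n" using n by auto
    then show ?thesis unfolding w_def cone_apply[OF fvec_finite[OF v], of DT DB phi "Suc n"] by simp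
  qed
  have wfin: "finite {j. w j \<noteq> 0}"
  proof -
    have "w \<in> fvec (Inl ` (BT (n - 1)) \<union> Inr ` BB n)"
      by (rule fvec_join) (use fvec_neg[OF f1] fvec_add[OF f2 f3] in \<open>simp_all add: wdef\<close>)
    then show ?thesis by (rule fvec_finite)
  qed
  have wl: "(\<lambda>a. w (Inl a)) = (\<lambda>a. - lapply (DT n) ?vl a)" by (simp add: wdef)
  have wr: "(\<lambda>b. w (Inr b)) = (\<lambda>b. lapply (phi n) ?vl b + lapply (DB (Suc n)) ?vr b)"
    by (simp add: wdef)
  have Tz: "lapply (DT (n - 1)) (lapply (DT n) ?vl) = (\<lambda>_. 0)" if n2: "n \<ge> 2"
  proof -
    have e: "Suc (n - 1) = n" and n1: "n - 1 \<ge> 1" using n2 by auto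
    have "?vl \<in> fvec (BT (Suc (n - 1)))" using vl e by simp
    from conjunct2[OF T[unfolded free_complex_def], rule_format, OF n1 this]
    show ?thesis unfolding e .
  qed
  have Bz: "lapply (DB n) (lapply (DB (Suc n)) ?vr) = (\<lambda>_. 0)"
    using conjunct2[OF B[unfolded free_complex_def], rule_format, OF n vr] .
  have Cz: "lapply (phi (n - 1)) (lapply (DT n) ?vl) = lapply (DB n) (lapply (phi n) ?vl)"
    using conjunct2[OF C[unfolded chain_map_def], rule_format, OF n vl] .
  show "lapply (cone_diff DT DB phi n) (lapply (cone_diff DT DB phi (Suc n)) v) = (\<lambda>_. 0)"
    unfolding w_def[symmetric] cone_apply[OF wfin] wl wr
  proof
    fix c show "(case c of Inl a' \<Rightarrow> if n \<le> 1 then 0 else - lapply (DT (n - 1)) (\<lambda>a. - lapply (DT n) ?vl a) a'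
       | Inr b' \<Rightarrow> lapply (phi (n - 1)) (\<lambda>a. - lapply (DT n) ?vl a) b' +
            lapply (DB n) (\<lambda>b. lapply (phi n) ?vl b + lapply (DB (Suc n)) ?vr b) b') = 0"
    proof (cases c)
      case (Inl a')
      show ?thesis
      proof (cases "n \<le> 1")
        case True then show ?thesis by (simp add: Inl)
      next
        case False
        then have n2: "n \<ge> 2" by simp
        have "lapply (DT (n - 1)) (\<lambda>a. - lapply (DT n) ?vl a) = (\<lambda>i. - lapply (DT (n - 1)) (lapply (DT n) ?vl) i)"
          by (rule lapply_neg)
        also have "\<dots> = (\<lambda>i. 0)" unfolding Tz[OF n2] by simp
        finally show ?thesis using Inl False by simp
      qed
    next
      case (Inr b')
      have e1: "lapply (phi (n - 1)) (\<lambda>a. - lapply (DT n) ?vl a) b' = - lapply (DB n) (lapply (phi n) ?vl) b'"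
        by (simp only: lapply_neg Cz)
      have e2: "lapply (DB n) (\<lambda>b. lapply (phi n) ?vl b + lapply (DB (Suc n)) ?vr b) b' = lapply (DB n) (lapply (phi n) ?vl) b' + 0"
        by (simp only: lapply_add[OF fvec_finite[OF f2] fvec_finite[OF f3]] Bz)
      show ?thesis using e1 e2 by (simp add: Inr)
    qed
  qed
qed


lemma cone_lift:
  assumes n: "n \<ge> 1" and al: "al \<in> fvec (BT n)" and br: "br \<in> fvec (BB (Suc n))"
    and G1: "\<And>a'. - lapply (DT n) al a' = v (Inl a')"
    and G2: "\<And>b'. lapply (phi n) al b' + lapply (DB (Suc n)) br b' = v (Inr b')"
  shows "\<exists>w\<in>fvec (cone_basis BT BB (Suc n)). lapply (cone_diff DT DB phi (Suc n)) w = v"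
proof -
  define w where "w = (\<lambda>c. case c of Inl a \<Rightarrow> al a | Inr b \<Rightarrow> br b)"
  have wl: "(\<lambda>a. w (Inl a)) = al" and wr: "(\<lambda>b. w (Inr b)) = br" by (simp_all add: w_def)
  have wf: "w \<in> fvec (cone_basis BT BB (Suc n))" unfolding cone_basis_alt
    by (rule fvec_join) (use al br in \<open>simp_all add: w_def\<close>)
  have nn: "\<not> Suc n \<le> 1" "Suc n - 1 = n" using n by auto
  have "lapply (cone_diff DT DB phi (Suc n)) w = v"
  proof
    fix c show "lapply (cone_diff DT DB phi (Suc n)) w c = v c"
      unfolding cone_apply[OF fvec_finite[OF wf]] wl wr using nn
      by (cases c) (simp_all add: G1 G2)
  qed
  with wf show ?thesis by blast
qed

lemma cone_kernel:
  assumes fin: "finite {j. v j \<noteq> 0}" and z: "lapply (cone_diff DT DB phi n) v = (\<lambda>_. 0)"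
  shows "n \<ge> 2 \<Longrightarrow> lapply (DT (n - 1)) (\<lambda>a. v (Inl a)) = (\<lambda>_. 0)"
    and "lapply (phi (n - 1)) (\<lambda>a. v (Inl a)) b' + lapply (DB n) (\<lambda>b. v (Inr b)) b' = 0"
proof -
  have z': "lapply (cone_diff DT DB phi n) v c = 0" for c using z by simp
  show "lapply (DT (n - 1)) (\<lambda>a. v (Inl a)) = (\<lambda>_. 0)" if n: "n \<ge> 2"
  proof
    fix a'
    have "\<not> n \<le> 1" using n by simp
    then show "lapply (DT (n - 1)) (\<lambda>a. v (Inl a)) a' = 0"
      using z'[of "Inl a'"] unfolding cone_apply[OF fin] by simp
  qed
  show "lapply (phi (n - 1)) (\<lambda>a. v (Inl a)) b' + lapply (DB n) (\<lambda>b. v (Inr b)) b' = 0"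
    using z'[of "Inr b'"] unfolding cone_apply[OF fin] by simp
qed

lemma ideal_gen_sub: "is_ideal I \<Longrightarrow> S \<subseteq> I \<Longrightarrow> ideal_gen S \<subseteq> I"
  unfolding ideal_gen_def by blast

lemma ideal_gen_super: "S \<subseteq> ideal_gen S"
  unfolding ideal_gen_def by blast

lemma principal_ideal: "is_ideal {s * d | s. True}"
  unfolding is_ideal_def
proof (intro conjI ballI allI)
  show "0 \<in> {s * d |s. True}" by (rule CollectI, rule exI[of _ 0]) simp
  fix x y assume "x \<in> {s * d |s. True}" "y \<in> {s * d |s. True}"
  then obtain s1 s2 where "x = s1 * d" "y = s2 * d" by blast
  then show "x + y \<in> {s * d |s. True}" by (intro CollectI exI[of _ "s1 + s2"]) (simp add: distrib_right)
next
  fix r x assume "x \<in> {s * d |s. True}"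
  then obtain s1 where "x = s1 * d" by blast
  then show "r * x \<in> {s * d |s. True}" by (intro CollectI exI[of _ "r * s1"]) (simp add: mult.assoc)
qed

lemma ideal_prod_sub:
  fixes A :: "'r::comm_ring_1 set"
  assumes A: "is_ideal A"
  shows "ideal_prod A (ideal_gen {d}) \<subseteq> {r * d | r. r \<in> A}"
  unfolding ideal_prod_def
proof (rule ideal_gen_sub)
  show "is_ideal {r * d | r. r \<in> A}" unfolding is_ideal_def
  proof (intro conjI ballI allI)
    show "0 \<in> {r * d |r. r \<in> A}" using A unfolding is_ideal_def by force
    fix x y assume "x \<in> {r * d |r. r \<in> A}" "y \<in> {r * d |r. r \<in> A}"
    then obtain s1 s2 where "x = s1 * d" "y = s2 * d" "s1 \<in> A" "s2 \<in> A" by blast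
    moreover have "s1 + s2 \<in> A" using A calculation unfolding is_ideal_def by blast
    ultimately show "x + y \<in> {r * d |r. r \<in> A}" by (intro CollectI exI[of _ "s1 + s2"]) (simp add: distrib_right)
  next
    fix r x assume "x \<in> {r * d |r. r \<in> A}"
    then obtain s1 where "x = s1 * d" "s1 \<in> A" by blast
    moreover have "r * s1 \<in> A" using A calculation unfolding is_ideal_def by blast
    ultimately show "r * x \<in> {r * d |r. r \<in> A}" by (intro CollectI exI[of _ "r * s1"]) (simp add: mult.assoc)
  qed
  have gd: "ideal_gen {d} \<subseteq> {s * d | s. True}"
    by (rule ideal_gen_sub[OF principal_ideal]) (auto intro: exI[of _ 1])
  show "{x * y |x y. x \<in> A \<and> y \<in> ideal_gen {d}} \<subseteq> {r * d |r. r \<in> A}"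
  proof
    fix z assume "z \<in> {x * y |x y. x \<in> A \<and> y \<in> ideal_gen {d}}"
    then obtain x y where "z = x * y" "x \<in> A" "y \<in> ideal_gen {d}" by blast
    moreover obtain s where "y = s * d" using gd calculation by blast
    moreover have "s * x \<in> A" using A calculation unfolding is_ideal_def by blast
    ultimately show "z \<in> {r * d |r. r \<in> A}"
      by (intro CollectI exI[of _ "s * x"]) (simp add: mult_ac)
  qed
qed

lemma ideal_prod_mem: "r \<in> A \<Longrightarrow> r * d \<in> ideal_prod A (ideal_gen {d})"
  unfolding ideal_prod_def
  using ideal_gen_super[of "{d}"] ideal_gen_super[of "{x * y |x y. x \<in> A \<and> y \<in> ideal_gen {d}}"]
  by blast




locale trim =
  fixes BF :: "nat \<Rightarrow> nat set" and dF :: "nat \<Rightarrow> nat \<Rightarrow> nat \<Rightarrow> 'r::comm_ring_1"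
    and t :: nat and e0 :: "nat \<Rightarrow> nat" and a :: "nat \<Rightarrow> 'r set"
    and BG :: "nat \<Rightarrow> nat \<Rightarrow> nat set" and mG :: "nat \<Rightarrow> nat \<Rightarrow> nat \<Rightarrow> nat \<Rightarrow> 'r"
    and q :: "nat \<Rightarrow> nat \<Rightarrow> nat \<Rightarrow> nat \<Rightarrow> 'r"
  assumes F_cx: "free_complex BF dF"
    and F_ex: "\<forall>n\<ge>1. {v \<in> fvec (BF n). lapply (dF n) v = (\<lambda>_. 0)} = lapply (dF (Suc n)) ` fvec (BF (Suc n))"
    and F0: "BF 0 = {0}"
    and e0_inj: "inj_on e0 {1..t}" and e0_basis: "e0 ` {1..t} \<subseteq> BF 1"
    and a_ideal: "\<forall>i\<in>{1..t}. is_ideal (a i)"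
    and G_cx: "\<forall>i\<in>{1..t}. free_complex (BG i) (mG i)"
    and G_ex: "\<forall>i\<in>{1..t}. \<forall>n\<ge>1. {v \<in> fvec (BG i n). lapply (mG i n) v = (\<lambda>_. 0)} = lapply (mG i (Suc n)) ` fvec (BG i (Suc n))"
    and G_img: "\<forall>i\<in>{1..t}. {lapply (mG i 1) v 0 |v. v \<in> fvec (BG i 1)} = a i"
    and G0: "\<forall>i\<in>{1..t}. BG i 0 = {0}"
    and q_hom: "\<forall>i\<in>{1..t}. \<forall>k\<ge>1. is_hom (BF (Suc k)) (BG i k) (q i k)"
    and q_1: "\<forall>i\<in>{1..t}. \<forall>v\<in>fvec (BF 2).
               lapply (mG i 1) (lapply (q i 1) v) = (\<lambda>c. if c = 0 then lapply (dF 2) v (e0 i) else 0)"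
    and q_k: "\<forall>i\<in>{1..t}. \<forall>k\<ge>2. \<forall>v\<in>fvec (BF (Suc k)).
               lapply (mG i k) (lapply (q i k) v) = lapply (q i (k - 1)) (lapply (dF (Suc k)) v)"
begin

abbreviation "E \<equiv> e0 ` {1..t}"
abbreviation "BT \<equiv> T_basis BF e0 t"
abbreviation "DT \<equiv> T_diff dF e0 t"
abbreviation "BB \<equiv> B_basis BG t"
abbreviation "DB \<equiv> B_diff mG dF e0"
abbreviation "PH \<equiv> trim_phi dF q t"

lemma BT0: "BT 0 = BF 1 - E" by (simp add: T_basis_def)
lemma BTn: "n \<ge> 1 \<Longrightarrow> BT n = BF (Suc n)" by (simp add: T_basis_def)
lemma BB0: "BB 0 = {(0, 0)}" by (simp add: B_basis_def)
lemma BBn: "n \<ge> 1 \<Longrightarrow> BB n = {(i, g). i \<in> {1..t} \<and> g \<in> BG i n}" by (simp add: B_basis_def)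

lemma DT_ge2: "n \<ge> 2 \<Longrightarrow> DT n = dF (Suc n)"
  by (auto simp: T_diff_def fun_eq_iff)

lemma DT1_apply: "lapply (DT 1) w = (\<lambda>j'. if j' \<in> E then 0 else lapply (dF 2) w j')"
proof
  fix j' show "lapply (DT 1) w j' = (if j' \<in> E then 0 else lapply (dF 2) w j')"
  proof (cases "j' \<in> E")
    case True
    have "T_diff dF e0 t 1 j j' = 0" for j using True unfolding T_diff_def by (simp only: if_True if_False one_neq_zero refl)
    then show ?thesis using True unfolding lapply_def by simp
  next
    case False
    have "T_diff dF e0 t 1 j j' = dF 2 j j'" for j using False unfolding T_diff_def by (simp only: if_True if_False one_neq_zero refl)
    then show ?thesis using False unfolding lapply_def by simp
  qed
qed

lemma PH0_apply: "lapply (PH 0) v = (\<lambda>c. if c = (0, 0) then lapply (dF 1) v 0 else 0)"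
proof
  fix c show "lapply (PH 0) v c = (if c = (0, 0) then lapply (dF 1) v 0 else 0)"
  proof (cases "c = (0, 0)")
    case True
    have "trim_phi dF q t 0 j c = dF 1 j 0" for j using True unfolding trim_phi_def by (simp only: if_True refl)
    then show ?thesis using True unfolding lapply_def by simp
  next
    case False
    have "trim_phi dF q t 0 j c = 0" for j using False unfolding trim_phi_def by (simp only: if_True if_False refl)
    then show ?thesis using False unfolding lapply_def by simp
  qed
qed

lemma PHn_apply:
  assumes n: "n \<ge> 1"
  shows "lapply (PH n) v = (\<lambda>c. if fst c \<in> {1..t} then lapply (q (fst c) n) v (snd c) else 0)"
proof
  fix c show "lapply (PH n) v c = (if fst c \<in> {1..t} then lapply (q (fst c) n) v (snd c) else 0)"
  proof (cases "fst c \<in> {1..t}")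
    case True
    have "trim_phi dF q t n j c = q (fst c) n j (snd c)" for j using True n unfolding trim_phi_def by simp
    then show ?thesis using True unfolding lapply_def by simp
  next
    case False
    have "trim_phi dF q t n j c = 0" for j using False n unfolding trim_phi_def by auto
    then show ?thesis using False unfolding lapply_def by auto
  qed
qed

lemma F_hom: "n \<ge> 1 \<Longrightarrow> is_hom (BF n) (BF (n - 1)) (dF n)"
  using F_cx unfolding free_complex_def by blast
lemma F_dd: "n \<ge> 1 \<Longrightarrow> v \<in> fvec (BF (Suc n)) \<Longrightarrow> lapply (dF n) (lapply (dF (Suc n)) v) = (\<lambda>_. 0)"
  using conjunct2[OF F_cx[unfolded free_complex_def], rule_format] .
lemma G_hom: "i \<in> {1..t} \<Longrightarrow> n \<ge> 1 \<Longrightarrow> is_hom (BG i n) (BG i (n - 1)) (mG i n)"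
  using conjunct1[OF G_cx[rule_format, unfolded free_complex_def], rule_format] .
lemma G_dd: "i \<in> {1..t} \<Longrightarrow> n \<ge> 1 \<Longrightarrow> v \<in> fvec (BG i (Suc n)) \<Longrightarrow> lapply (mG i n) (lapply (mG i (Suc n)) v) = (\<lambda>_. 0)"
  using conjunct2[OF G_cx[rule_format, unfolded free_complex_def], rule_format] .

lemma DBn_apply:
  assumes n: "n \<ge> 2" and fin: "finite {c. g c \<noteq> 0}"
  shows "lapply (DB n) g (i, y) = lapply (mG i n) (\<lambda>x. g (i, x)) y"
proof -
  have "lapply (DB n) g (i, y) = (\<Sum>c\<in>{c. g c \<noteq> 0}. if fst c = i then g c * mG i n (snd c) y else 0)"
    unfolding lapply_def using n by (intro sum.cong) (auto simp: B_diff_def)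
  also have "\<dots> = (\<Sum>c\<in>{c \<in> {c. g c \<noteq> 0}. fst c = i}. g c * mG i n (snd c) y)"
    by (rule sum.inter_filter[OF fin, symmetric])
  also have "{c \<in> {c. g c \<noteq> 0}. fst c = i} = Pair i ` {x. g (i, x) \<noteq> 0}" by auto
  also have "(\<Sum>c\<in>Pair i ` {x. g (i, x) \<noteq> 0}. g c * mG i n (snd c) y) = lapply (mG i n) (\<lambda>x. g (i, x)) y"
    by (subst sum.reindex) (auto simp: inj_on_def lapply_def)
  finally show ?thesis .
qed

lemma slice_fvec:
  assumes n: "n \<ge> 1" and g: "g \<in> fvec (BB n)"
  shows "(\<lambda>x. g (i, x)) \<in> fvec (BG i n)" "i \<notin> {1..t} \<Longrightarrow> (\<lambda>x. g (i, x)) = (\<lambda>x. 0)"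
proof -
  have fin: "finite {c. g c \<noteq> 0}" using g fvec_finite by blast
  show "(\<lambda>x. g (i, x)) \<in> fvec (BG i n)"
  proof (rule fvecI)
    show "finite {x. g (i, x) \<noteq> 0}"
      using finite_vimageI[OF fin, of "Pair i"] by (simp add: vimage_def inj_on_def)
    fix x assume "x \<notin> BG i n"
    then have "(i, x) \<notin> BB n" using BBn[OF n] by auto
    then show "g (i, x) = 0" by (rule fvec_out[OF g])
  qed
  show "(\<lambda>x. g (i, x)) = (\<lambda>x. 0)" if i: "i \<notin> {1..t}"
  proof
    fix x
    have "(i, x) \<notin> BB n" using BBn[OF n] i by auto
    then show "g (i, x) = 0" by (rule fvec_out[OF g])
  qed
qed

lemma glue_fvec:
  assumes n: "n \<ge> 1" and gs: "\<forall>i\<in>{1..t}. gs i \<in> fvec (BG i n)"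
  shows "(\<lambda>c. if fst c \<in> {1..t} then gs (fst c) (snd c) else 0) \<in> fvec (BB n)"
proof (rule fvecI)
  have "{c. (if fst c \<in> {1..t} then gs (fst c) (snd c) else 0) \<noteq> 0} \<subseteq> Sigma {1..t} (\<lambda>i. {x. gs i x \<noteq> 0})"
    by (auto split: if_splits)
  moreover have "finite (Sigma {1..t} (\<lambda>i. {x. gs i x \<noteq> 0}))"
    using gs fvec_finite by blast
  ultimately show "finite {c. (if fst c \<in> {1..t} then gs (fst c) (snd c) else 0) \<noteq> 0}"
    by (rule finite_subset)
  fix c assume "c \<notin> BB n"
  then show "(if fst c \<in> {1..t} then gs (fst c) (snd c) else 0) = 0"
  proof (cases c)
    case (Pair i x)
    show ?thesis
    proof (cases "i \<in> {1..t}")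
      case True
      then have "x \<notin> BG i n" using \<open>c \<notin> BB n\<close> Pair BBn[OF n] by auto
      then show ?thesis using fvec_out[OF gs[rule_format, OF True]] Pair by simp
    qed (use Pair in auto)
  qed
qed

lemma DB1_apply:
  assumes g: "g \<in> fvec (BB 1)"
  shows "lapply (DB 1) g c' = (if c' = (0, 0) then - (\<Sum>i\<in>{1..t}. lapply (mG i 1) (\<lambda>x. g (i, x)) 0 * dF 1 (e0 i) 0) else 0)"
proof (cases "c' = (0, 0)")
  case False
  have "B_diff mG dF e0 1 c c' = 0" for c using False unfolding B_diff_def by simp
  then show ?thesis using False unfolding lapply_def by simp
next
  case True
  have fin: "finite {c. g c \<noteq> 0}" using g fvec_finite by blast
  have sl: "finite {x. g (i, x) \<noteq> 0}" for i
    using finite_vimageI[OF fin, of "Pair i"] by (simp add: vimage_def inj_on_def)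
  have eq: "{c. g c \<noteq> 0} = Sigma {1..t} (\<lambda>i. {x. g (i, x) \<noteq> 0})"
  proof (rule set_eqI)
    fix c show "c \<in> {c. g c \<noteq> 0} \<longleftrightarrow> c \<in> Sigma {1..t} (\<lambda>i. {x. g (i, x) \<noteq> 0})"
    proof (cases c)
      case (Pair i x)
      have "g (i, x) \<noteq> 0 \<Longrightarrow> i \<in> {1..t}" using fvec_out[OF g, of "(i, x)"] BBn[of 1] by auto
      then show ?thesis using Pair by auto
    qed
  qed
  have "lapply (DB 1) g (0, 0) = (\<Sum>c\<in>Sigma {1..t} (\<lambda>i. {x. g (i, x) \<noteq> 0}). g c * - (mG (fst c) 1 (snd c) 0 * dF 1 (e0 (fst c)) 0))"
    unfolding lapply_def eq[symmetric] by (simp add: B_diff_def)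
  also have "\<dots> = (\<Sum>(i, x)\<in>Sigma {1..t} (\<lambda>i. {x. g (i, x) \<noteq> 0}). g (i, x) * - (mG i 1 x 0 * dF 1 (e0 i) 0))"
    by (simp add: case_prod_beta)
  also have "\<dots> = (\<Sum>i\<in>{1..t}. \<Sum>x\<in>{x. g (i, x) \<noteq> 0}. g (i, x) * - (mG i 1 x 0 * dF 1 (e0 i) 0))"
    by (rule sum.Sigma[symmetric]) (auto intro: sl)
  also have "\<dots> = (\<Sum>i\<in>{1..t}. - (lapply (mG i 1) (\<lambda>x. g (i, x)) 0 * dF 1 (e0 i) 0))"
    by (rule sum.cong) (simp_all add: lapply_def sum_distrib_right sum_negf mult.assoc)
  also have "\<dots> = - (\<Sum>i\<in>{1..t}. lapply (mG i 1) (\<lambda>x. g (i, x)) 0 * dF 1 (e0 i) 0)"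
    by (simp add: sum_negf)
  finally show ?thesis using True by simp
qed

lemma split_E:
  assumes fin: "finite {j. w j \<noteq> 0}"
  shows "lapply D w x = lapply D (\<lambda>j. if j \<in> E then 0 else w j) x + (\<Sum>i\<in>{1..t}. w (e0 i) * D (e0 i) x)"
proof -
  let ?S = "{j. w j \<noteq> 0} \<union> E"
  have fS: "finite ?S" using fin by simp
  have "lapply D w x = (\<Sum>j\<in>?S. w j * D j x)" by (rule lapply_superset[OF fS]) auto
  also have "\<dots> = (\<Sum>j\<in>?S - E. w j * D j x) + (\<Sum>j\<in>E. w j * D j x)"
    by (rule sum.subset_diff) (use fS in auto)
  also have "(\<Sum>j\<in>?S - E. w j * D j x) = lapply D (\<lambda>j. if j \<in> E then 0 else w j) x"
  proof -
    have "lapply D (\<lambda>j. if j \<in> E then 0 else w j) x = (\<Sum>j\<in>?S. (if j \<in> E then 0 else w j) * D j x)"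
      by (rule lapply_superset[OF fS]) auto
    also have "\<dots> = (\<Sum>j\<in>?S - E. (if j \<in> E then 0 else w j) * D j x) + (\<Sum>j\<in>E. (if j \<in> E then 0 else w j) * D j x)"
      by (rule sum.subset_diff) (use fS in auto)
    also have "\<dots> = (\<Sum>j\<in>?S - E. w j * D j x)" by simp
    finally show ?thesis by simp
  qed
  also have "(\<Sum>j\<in>E. w j * D j x) = (\<Sum>i\<in>{1..t}. w (e0 i) * D (e0 i) x)"
    using sum.reindex[OF e0_inj, of "\<lambda>j. w j * D j x"] by (simp add: o_def)
  finally show ?thesis .
qed

lemma DT_hom: "n \<ge> 1 \<Longrightarrow> is_hom (BT n) (BT (n - 1)) (DT n)"
proof (cases "n = 1")
  case True
  show ?thesis unfolding is_hom_def
  proof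
    fix j assume "j \<in> BT n"
    then have j: "j \<in> BF 2" using True BTn by (simp add: numeral_2_eq_2)
    have dj: "dF 2 j \<in> fvec (BF 1)" using F_hom[of 2] j unfolding is_hom_def by simp
    have eq: "DT n j = (\<lambda>j'. if j' \<in> E then 0 else dF 2 j j')"
      using True unfolding T_diff_def by (simp add: fun_eq_iff)
    show "DT n j \<in> fvec (BT (n - 1))" unfolding eq
    proof (rule fvecI)
      show "finite {j'. (if j' \<in> E then 0 else dF 2 j j') \<noteq> 0}"
        by (rule finite_subset[OF _ fvec_finite[OF dj]]) auto
      fix j' assume "j' \<notin> BT (n - 1)"
      then have "j' \<in> E \<or> j' \<notin> BF 1" using True BT0 by auto
      then show "(if j' \<in> E then 0 else dF 2 j j') = 0" using fvec_out[OF dj] by auto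
    qed
  qed
next
  case False
  assume n: "n \<ge> 1"
  then have n2: "n \<ge> 2" using False by simp
  have "is_hom (BF (Suc n)) (BF (Suc n - 1)) (dF (Suc n))" by (rule F_hom) simp
  moreover have "BT n = BF (Suc n)" "BT (n - 1) = BF n" using n2 BTn by auto
  ultimately show ?thesis using DT_ge2[OF n2] by simp
qed

lemma T_dd1:
  assumes v: "v \<in> fvec (BF 3)"
  shows "lapply (DT 1) (lapply (DT 2) v) = (\<lambda>_. 0)"
proof -
  have A: "lapply (dF 2) (lapply (dF 3) v) = (\<lambda>_. 0)" using F_dd[of 2 v] v by (simp add: numeral_3_eq_3)
  have B: "DT 2 = dF 3" using DT_ge2[of 2] by (simp add: numeral_3_eq_3)
  show ?thesis unfolding DT1_apply B A by simp
qed

lemma T_cx: "free_complex BT DT"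
  unfolding free_complex_def
proof (intro conjI allI impI ballI)
  fix n :: nat assume "1 \<le> n" then show "is_hom (BT n) (BT (n - 1)) (DT n)" by (rule DT_hom)
next
  fix n :: nat and v :: "nat \<Rightarrow> 'r" assume n: "1 \<le> n" and v: "v \<in> fvec (BT (Suc n))"
  then have v': "v \<in> fvec (BF (Suc (Suc n)))" using BTn by simp
  show "lapply (DT n) (lapply (DT (Suc n)) v) = (\<lambda>_. 0)"
  proof (cases "n = 1")
    case True
    have "v \<in> fvec (BF 3)" using v' True by (simp add: numeral_3_eq_3)
    from T_dd1[OF this] show ?thesis using True by (simp add: numeral_2_eq_2)
  next
    case False
    then have n2: "n \<ge> 2" using n by simp
    have n3: "Suc n \<ge> 2" using n2 by simp
    have "lapply (dF (Suc n)) (lapply (dF (Suc (Suc n))) v) = (\<lambda>_. 0)" by (rule F_dd[OF _ v']) simp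
    then show ?thesis unfolding DT_ge2[OF n2] DT_ge2[OF n3] .
  qed
qed

lemma DB_hom: "n \<ge> 1 \<Longrightarrow> is_hom (BB n) (BB (n - 1)) (DB n)"
  unfolding is_hom_def
proof
  fix c assume n: "n \<ge> 1" and c: "c \<in> BB n"
  show "DB n c \<in> fvec (BB (n - 1))"
  proof (cases "n = 1")
    case True
    have z: "DB n c c' = 0" if "c' \<noteq> (0, 0)" for c' using that True unfolding B_diff_def by simp
    show ?thesis
    proof (rule fvecI)
      show "finite {c'. DB n c c' \<noteq> 0}" by (rule finite_subset[of _ "{(0, 0)}"]) (use z in auto)
      fix c' assume "c' \<notin> BB (n - 1)"
      then show "DB n c c' = 0" using z True BB0 by auto
    qed
  next
    case False
    then have n2: "n \<ge> 2" using n by simp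
    obtain i g where cig: "c = (i, g)" and i: "i \<in> {1..t}" and g: "g \<in> BG i n" using c BBn[OF n] by auto
    have m: "mG i n g \<in> fvec (BG i (n - 1))" using G_hom[OF i n] g unfolding is_hom_def by blast
    have eq: "DB n c c' = (if fst c' = i then mG i n g (snd c') else 0)" for c'
      using n2 cig unfolding B_diff_def by auto
    show ?thesis
    proof (rule fvecI)
      have "{c'. DB n c c' \<noteq> 0} \<subseteq> Pair i ` {x. mG i n g x \<noteq> 0}"
        unfolding eq by (auto split: if_splits)
      then show "finite {c'. DB n c c' \<noteq> 0}"
        by (rule finite_subset) (use fvec_finite[OF m] in simp)
      fix c' assume c': "c' \<notin> BB (n - 1)"
      show "DB n c c' = 0"
      proof (cases "fst c' = i")
        case True
        then have "snd c' \<notin> BG i (n - 1)" using c' BBn[of "n - 1"] n2 i by (cases c') auto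
        then show ?thesis unfolding eq using fvec_out[OF m] by simp
      qed (simp add: eq)
    qed
  qed
qed

lemma DB_slice:
  assumes "n \<ge> 2" "finite {c. g c \<noteq> 0}"
  shows "(\<lambda>x. lapply (DB n) g (i, x)) = lapply (mG i n) (\<lambda>x. g (i, x))"
  using DBn_apply[OF assms] by (simp add: fun_eq_iff)

lemma B_dd1:
  assumes b: "b \<in> fvec (BB 2)"
  shows "lapply (DB 1) (lapply (DB 2) b) = (\<lambda>_. 0)"
proof
  fix c'
  have bfin: "finite {c. b c \<noteq> 0}" using b fvec_finite by blast
  have Db: "lapply (DB 2) b \<in> fvec (BB 1)" using lapply_fvec[OF DB_hom b] by simp
  have sl: "(\<lambda>x. lapply (DB 2) b (i, x)) = lapply (mG i 2) (\<lambda>x. b (i, x))" for i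
    by (rule DB_slice) (use bfin in auto)
  have zi: "lapply (mG i 1) (lapply (mG i 2) (\<lambda>x. b (i, x))) = (\<lambda>_. 0)" if i: "i \<in> {1..t}" for i
    using G_dd[OF i order.refl, of "\<lambda>x. b (i, x)"] slice_fvec(1)[OF _ b, of i] by (simp add: numeral_2_eq_2)
  show "lapply (DB 1) (lapply (DB 2) b) c' = 0"
    unfolding DB1_apply[OF Db] sl using zi by simp
qed

lemma B_cx: "free_complex BB DB"
  unfolding free_complex_def
proof (intro conjI allI impI ballI)
  fix n :: nat assume "1 \<le> n" then show "is_hom (BB n) (BB (n - 1)) (DB n)" by (rule DB_hom)
next
  fix n :: nat and b :: "nat \<times> nat \<Rightarrow> 'r" assume n: "1 \<le> n" and b: "b \<in> fvec (BB (Suc n))"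
  have bfin: "finite {c. b c \<noteq> 0}" using b fvec_finite by blast
  have Db: "lapply (DB (Suc n)) b \<in> fvec (BB n)" using lapply_fvec[OF DB_hom b] by simp
  have sl: "(\<lambda>x. lapply (DB (Suc n)) b (i, x)) = lapply (mG i (Suc n)) (\<lambda>x. b (i, x))" for i
    by (rule DB_slice) (use n bfin in auto)
  have zi: "lapply (mG i n) (lapply (mG i (Suc n)) (\<lambda>x. b (i, x))) = (\<lambda>_. 0)" if i: "i \<in> {1..t}" for i
    by (rule G_dd[OF i n slice_fvec(1)[OF _ b]]) simp
  show "lapply (DB n) (lapply (DB (Suc n)) b) = (\<lambda>_. 0)"
  proof
    fix c'
    show "lapply (DB n) (lapply (DB (Suc n)) b) c' = 0"
    proof (cases "n = 1")
      case True
      have "b \<in> fvec (BB 2)" using b True by (simp add: numeral_2_eq_2)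
      from B_dd1[OF this] show ?thesis using True by (simp add: numeral_2_eq_2)
    next
      case False
      then have n2: "n \<ge> 2" using n by simp
      obtain i y where c': "c' = (i, y)" by (cases c')
      have "lapply (DB n) (lapply (DB (Suc n)) b) (i, y) = lapply (mG i n) (lapply (mG i (Suc n)) (\<lambda>x. b (i, x))) y"
        unfolding DBn_apply[OF n2 fvec_finite[OF Db]] sl ..
      also have "\<dots> = 0"
      proof (cases "i \<in> {1..t}")
        case True then show ?thesis using zi by simp
      next
        case False
        then show ?thesis using slice_fvec(2)[OF _ b False] by (simp add: lapply_zero)
      qed
      finally show ?thesis using c' by simp
    qed
  qed
qed

lemma PH_hom: "is_hom (BT n) (BB n) (PH n)"
  unfolding is_hom_def
proof
  fix j assume j: "j \<in> BT n"
  show "PH n j \<in> fvec (BB n)"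
  proof (cases "n = 0")
    case True
    have z: "PH n j c' = 0" if "c' \<noteq> (0, 0)" for c' using that True unfolding trim_phi_def by simp
    show ?thesis
    proof (rule fvecI)
      show "finite {c'. PH n j c' \<noteq> 0}" by (rule finite_subset[of _ "{(0, 0)}"]) (use z in auto)
      fix c' assume "c' \<notin> BB n"
      then show "PH n j c' = 0" using z True BB0 by auto
    qed
  next
    case False
    then have n: "n \<ge> 1" by simp
    have "j \<in> BF (Suc n)" using j BTn[OF n] by simp
    then have gs: "\<forall>i\<in>{1..t}. q i n j \<in> fvec (BG i n)" using q_hom n unfolding is_hom_def by blast
    have "PH n j = (\<lambda>c. if fst c \<in> {1..t} then q (fst c) n j (snd c) else 0)"
      using n unfolding trim_phi_def by (auto simp: fun_eq_iff)
    then show ?thesis using glue_fvec[OF n gs] by simp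
  qed
qed

lemma PH1_slice: "i \<in> {1..t} \<Longrightarrow> (\<lambda>x. lapply (PH n) v (i, x)) = lapply (q i n) v" if "n \<ge> 1"
  using PHn_apply[OF that] by (simp add: fun_eq_iff)

lemma PH_slice_out: "i \<notin> {1..t} \<Longrightarrow> (\<lambda>x. lapply (PH n) v (i, x)) = (\<lambda>x. 0)" if "n \<ge> 1"
  using PHn_apply[OF that] by (auto simp: fun_eq_iff)

lemma chain1:
  assumes v: "v \<in> fvec (BF 2)"
  shows "lapply (PH 0) (lapply (DT 1) v) = lapply (DB 1) (lapply (PH 1) v)"
proof
  fix c
  let ?d = "lapply (dF 2) v"
  have d2: "?d \<in> fvec (BF 1)" using lapply_fvec[OF F_hom[of 2] v] by simp
  have v1: "v \<in> fvec (BT 1)" using v BTn[of 1] by (simp add: numeral_2_eq_2)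
  have P1: "lapply (PH 1) v \<in> fvec (BB 1)" by (rule lapply_fvec[OF PH_hom v1])
  have zero: "lapply (dF 1) ?d 0 = 0"
    using F_dd[of 1 v] v by (simp add: numeral_2_eq_2)
  have spl: "lapply (dF 1) ?d 0 = lapply (dF 1) (\<lambda>j. if j \<in> E then 0 else ?d j) 0 + (\<Sum>i\<in>{1..t}. ?d (e0 i) * dF 1 (e0 i) 0)"
    by (rule split_E[OF fvec_finite[OF d2]])
  have L: "lapply (dF 1) (lapply (DT 1) v) 0 = - (\<Sum>i\<in>{1..t}. ?d (e0 i) * dF 1 (e0 i) 0)"
    using spl zero unfolding DT1_apply by (simp add: eq_neg_iff_add_eq_0)
  have R: "(\<Sum>i\<in>{1..t}. lapply (mG i 1) (\<lambda>x. lapply (PH 1) v (i, x)) 0 * dF 1 (e0 i) 0)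
        = (\<Sum>i\<in>{1..t}. ?d (e0 i) * dF 1 (e0 i) 0)"
  proof (rule sum.cong)
    fix i assume i: "i \<in> {1..t}"
    have "lapply (mG i 1) (lapply (q i 1) v) 0 = ?d (e0 i)" using q_1 i v by simp
    then show "lapply (mG i 1) (\<lambda>x. lapply (PH 1) v (i, x)) 0 * dF 1 (e0 i) 0 = ?d (e0 i) * dF 1 (e0 i) 0"
      using PH1_slice[of 1 i v] i by simp
  qed simp
  show "lapply (PH 0) (lapply (DT 1) v) c = lapply (DB 1) (lapply (PH 1) v) c"
    unfolding PH0_apply DB1_apply[OF P1] R L ..
qed

lemma chain_ge2:
  assumes n: "n \<ge> 2" and v: "v \<in> fvec (BF (Suc n))"
  shows "lapply (PH (n - 1)) (lapply (DT n) v) = lapply (DB n) (lapply (PH n) v)"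
proof
  fix c
  obtain i y :: nat where c: "c = (i, y)" by (cases c)
  have n1: "n - 1 \<ge> 1" "n \<ge> 1" using n by auto
  have vT: "v \<in> fvec (BT n)" using v BTn n1 by simp
  have P: "lapply (PH n) v \<in> fvec (BB n)" by (rule lapply_fvec[OF PH_hom vT])
  have e1: "lapply (DB n) (lapply (PH n) v) (i, y) = lapply (mG i n) (\<lambda>x. lapply (PH n) v (i, x)) y"
    by (rule DBn_apply[OF n fvec_finite[OF P]])
  have e2: "lapply (PH (n - 1)) (lapply (DT n) v) (i, y) =
      (if i \<in> {1..t} then lapply (q i (n - 1)) (lapply (dF (Suc n)) v) y else 0)"
    unfolding PHn_apply[OF n1(1)] DT_ge2[OF n] by simp
  show "lapply (PH (n - 1)) (lapply (DT n) v) c = lapply (DB n) (lapply (PH n) v) c"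
  proof (cases "i \<in> {1..t}")
    case True
    have "lapply (mG i n) (lapply (q i n) v) = lapply (q i (n - 1)) (lapply (dF (Suc n)) v)"
      using q_k True n v by blast
    then show ?thesis using e1 e2 True PH1_slice[OF n1(2) True, of v] c by simp
  next
    case False
    then show ?thesis using e1 e2 PH_slice_out[OF n1(2) False, of v] c by (auto simp: lapply_zero)
  qed
qed

lemma chain: "chain_map BT DT BB DB PH"
  unfolding chain_map_def
proof (intro conjI allI impI ballI)
  fix n show "is_hom (BT n) (BB n) (PH n)" by (rule PH_hom)
next
  fix n :: nat and v :: "nat \<Rightarrow> 'r" assume n: "1 \<le> n" and v: "v \<in> fvec (BT n)"
  show "lapply (PH (n - 1)) (lapply (DT n) v) = lapply (DB n) (lapply (PH n) v)"
  proof (cases "n = 1")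
    case True
    have "v \<in> fvec (BF 2)" using v True BTn[of 1] by (simp add: numeral_2_eq_2)
    from chain1[OF this] show ?thesis using True by simp
  next
    case False
    then have n2: "n \<ge> 2" using n by simp
    have "v \<in> fvec (BF (Suc n))" using v BTn n by simp
    from chain_ge2[OF n2 this] show ?thesis .
  qed
qed

lemma B_exact:
  assumes n: "n \<ge> 2" and u: "u \<in> fvec (BB n)" and z: "lapply (DB n) u = (\<lambda>_. 0)"
  shows "\<exists>br\<in>fvec (BB (Suc n)). lapply (DB (Suc n)) br = u"
proof -
  have n1: "n \<ge> 1" using n by simp
  have "\<forall>i\<in>{1..t}. \<exists>g. g \<in> fvec (BG i (Suc n)) \<and> lapply (mG i (Suc n)) g = (\<lambda>x. u (i, x))"
  proof
    fix i assume i: "i \<in> {1..t}"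
    have sl: "(\<lambda>x. u (i, x)) \<in> fvec (BG i n)" by (rule slice_fvec(1)[OF n1 u])
    have "lapply (mG i n) (\<lambda>x. u (i, x)) = (\<lambda>x. lapply (DB n) u (i, x))"
      using DB_slice[OF n fvec_finite[OF u]] by simp
    also have "\<dots> = (\<lambda>_. 0)" using z by simp
    finally have "(\<lambda>x. u (i, x)) \<in> {v \<in> fvec (BG i n). lapply (mG i n) v = (\<lambda>_. 0)}" using sl by simp
    from this[unfolded G_ex[rule_format, OF i n1]] obtain g
      where g: "g \<in> fvec (BG i (Suc n))" "(\<lambda>x. u (i, x)) = lapply (mG i (Suc n)) g" by (rule imageE)
    then show "\<exists>g. g \<in> fvec (BG i (Suc n)) \<and> lapply (mG i (Suc n)) g = (\<lambda>x. u (i, x))"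
      by (intro exI[of _ g]) simp
  qed
  then obtain gs where gs: "\<forall>i\<in>{1..t}. gs i \<in> fvec (BG i (Suc n)) \<and> lapply (mG i (Suc n)) (gs i) = (\<lambda>x. u (i, x))"
    by metis
  define br where "br = (\<lambda>c. if fst c \<in> {1..t} then gs (fst c) (snd c) else 0)"
  have brf: "br \<in> fvec (BB (Suc n))" unfolding br_def by (rule glue_fvec) (use gs in auto)
  have "lapply (DB (Suc n)) br = u"
  proof
    fix c obtain i y :: nat where c: "c = (i, y)" by (cases c)
    have "lapply (DB (Suc n)) br (i, y) = lapply (mG i (Suc n)) (\<lambda>x. br (i, x)) y"
      by (rule DBn_apply) (use n fvec_finite[OF brf] in auto)
    also have "\<dots> = u (i, y)"
    proof (cases "i \<in> {1..t}")
      case True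
      then have "(\<lambda>x. br (i, x)) = gs i" by (simp add: br_def)
      then show ?thesis using gs True by simp
    next
      case False
      then have "(\<lambda>x. br (i, x)) = (\<lambda>x. 0)" by (auto simp: br_def)
      then show ?thesis using slice_fvec(2)[OF n1 u False] False by (simp add: lapply_zero fun_eq_iff)
    qed
    finally show "lapply (DB (Suc n)) br c = u c" using c by simp
  qed
  with brf show ?thesis by blast
qed

abbreviation "CB \<equiv> cone_basis BT BB"
abbreviation "CD \<equiv> cone_diff DT DB PH"

lemma cone_cx: "free_complex CB CD" by (rule cone_complex[OF T_cx B_cx chain])

lemma exact_ge2:
  assumes n: "n \<ge> 2" and vl: "vl \<in> fvec (BF n)" and vr: "vr \<in> fvec (BB n)"
    and kl: "lapply (dF n) vl = (\<lambda>_. 0)"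
    and kr: "\<And>b'. lapply (PH (n - 1)) vl b' + lapply (DB n) vr b' = 0"
  shows "\<exists>al\<in>fvec (BT n). \<exists>br\<in>fvec (BB (Suc n)). (\<forall>a'. - lapply (DT n) al a' = vl a') \<and>
           (\<forall>b'. lapply (PH n) al b' + lapply (DB (Suc n)) br b' = vr b')"
proof -
  have n1: "n \<ge> 1" using n by simp
  have "vl \<in> {v \<in> fvec (BF n). lapply (dF n) v = (\<lambda>_. 0)}" using vl kl by simp
  from this[unfolded F_ex[rule_format, OF n1]] obtain a0
    where a0: "a0 \<in> fvec (BF (Suc n))" and vla: "vl = lapply (dF (Suc n)) a0" by (rule imageE)
  have a0T: "a0 \<in> fvec (BT n)" using a0 BTn[OF n1] by simp
  define al where "al = (\<lambda>j. - a0 j)"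
  have alf: "al \<in> fvec (BT n)" unfolding al_def by (rule fvec_neg[OF a0T])
  have G1: "- lapply (DT n) al a' = vl a'" for a'
    unfolding al_def lapply_neg DT_ge2[OF n] vla by simp
  have P: "lapply (PH n) a0 \<in> fvec (BB n)" by (rule lapply_fvec[OF PH_hom a0T])
  define u where "u = (\<lambda>b. vr b + lapply (PH n) a0 b)"
  have uf: "u \<in> fvec (BB n)" unfolding u_def by (rule fvec_add[OF vr P])
  have c: "lapply (PH (n - 1)) vl = lapply (DB n) (lapply (PH n) a0)"
    using chain_ge2[OF n a0] unfolding DT_ge2[OF n] vla[symmetric] .
  have "lapply (DB n) u = (\<lambda>b. lapply (DB n) vr b + lapply (DB n) (lapply (PH n) a0) b)"
    unfolding u_def by (rule lapply_add[OF fvec_finite[OF vr] fvec_finite[OF P]])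
  also have "\<dots> = (\<lambda>_. 0)" unfolding c[symmetric] using kr by (simp add: add.commute)
  finally obtain br where brf: "br \<in> fvec (BB (Suc n))" and br: "lapply (DB (Suc n)) br = u"
    using B_exact[OF n uf] by blast
  have G2: "lapply (PH n) al b' + lapply (DB (Suc n)) br b' = vr b'" for b'
    unfolding al_def lapply_neg br u_def by simp
  show ?thesis using alf brf G1 G2 by blast
qed

lemma dd2_zero:
  assumes vl: "vl \<in> fvec (BF 2)" and vr: "vr \<in> fvec (BB 2)"
    and kl: "lapply (DT 1) vl = (\<lambda>_. 0)"
    and kr: "\<And>b'. lapply (PH 1) vl b' + lapply (DB 2) vr b' = 0"
  shows "lapply (dF 2) vl = (\<lambda>_. 0)"
proof
  fix j'
  show "lapply (dF 2) vl j' = 0"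
  proof (cases "j' \<in> E")
    case False
    have "lapply (DT 1) vl j' = 0" using kl by simp
    then show ?thesis unfolding DT1_apply using False by simp
  next
    case True
    then obtain i where i: "i \<in> {1..t}" and j: "j' = e0 i" by blast
    have sl: "lapply (q i 1) vl = (\<lambda>x. - lapply (mG i 2) (\<lambda>y. vr (i, y)) x)"
    proof
      fix x
      have k: "lapply (PH 1) vl (i, x) + lapply (DB 2) vr (i, x) = 0" by (rule kr)
      have p: "lapply (PH 1) vl (i, x) = lapply (q i 1) vl x" using PHn_apply[of 1 vl] i by simp
      have d: "lapply (DB 2) vr (i, x) = lapply (mG i 2) (\<lambda>y. vr (i, y)) x"
        by (rule DBn_apply) (use fvec_finite[OF vr] in auto)
      show "lapply (q i 1) vl x = - lapply (mG i 2) (\<lambda>y. vr (i, y)) x"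
        using k unfolding p d by (simp add: eq_neg_iff_add_eq_0)
    qed
    have "lapply (dF 2) vl (e0 i) = lapply (mG i 1) (lapply (q i 1) vl) 0" using q_1 i vl by simp
    also have "\<dots> = - lapply (mG i 1) (lapply (mG i 2) (\<lambda>y. vr (i, y))) 0" unfolding sl lapply_neg by simp
    also have "\<dots> = 0"
      using G_dd[OF i order.refl, of "\<lambda>y. vr (i, y)"] slice_fvec(1)[OF _ vr, of i] by (simp add: numeral_2_eq_2)
    finally show ?thesis using j by simp
  qed
qed

lemma exact1:
  assumes vl: "vl \<in> fvec (BF 1 - E)" and vr: "vr \<in> fvec (BB 1)"
    and kr: "\<And>b'. lapply (PH 0) vl b' + lapply (DB 1) vr b' = 0"
  shows "\<exists>al\<in>fvec (BT 1). \<exists>br\<in>fvec (BB (Suc 1)). (\<forall>a'. - lapply (DT 1) al a' = vl a') \<and>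
           (\<forall>b'. lapply (PH 1) al b' + lapply (DB (Suc 1)) br b' = vr b')"
proof -
  have s12: "Suc 1 = (2::nat)" by simp
  define c where "c i = - lapply (mG i 1) (\<lambda>x. vr (i, x)) 0" for i
  define u where "u j = vl j + (\<Sum>i\<in>{1..t}. if j = e0 i then c i else 0)" for j
  have vlE: "vl j = 0" if "j \<in> E" for j using fvec_out[OF vl] that by auto
  have uE: "u (e0 i) = c i" if i: "i \<in> {1..t}" for i
  proof -
    have "(\<Sum>i'\<in>{1..t}. if e0 i = e0 i' then c i' else 0) = (\<Sum>i'\<in>{1..t}. if i = i' then c i' else 0)"
      by (rule sum.cong) (use inj_onD[OF e0_inj] i in auto)
    also have "\<dots> = c i" using i by simp
    finally show ?thesis unfolding u_def using vlE i by simp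
  qed
  have unE: "u j = vl j" if j: "j \<notin> E" for j
  proof -
    have "(\<Sum>i\<in>{1..t}. if j = e0 i then c i else 0) = 0" by (rule sum.neutral) (use j in auto)
    then show ?thesis unfolding u_def by simp
  qed
  have uf: "u \<in> fvec (BF 1)"
  proof (rule fvecI)
    have "{j. u j \<noteq> 0} \<subseteq> {j. vl j \<noteq> 0} \<union> E" using unE by fastforce
    then show "finite {j. u j \<noteq> 0}" by (rule finite_subset) (use fvec_finite[OF vl] in simp)
    fix j assume "j \<notin> BF 1"
    then have "j \<notin> E" "vl j = 0" using e0_basis fvec_out[OF vl] by auto
    then show "u j = 0" using unE by simp
  qed
  have offE: "(\<lambda>j. if j \<in> E then 0 else u j) = vl" using unE vlE by (auto simp: fun_eq_iff)
  have sc: "(\<Sum>i\<in>{1..t}. u (e0 i) * dF 1 (e0 i) 0) = (\<Sum>i\<in>{1..t}. c i * dF 1 (e0 i) 0)"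
    by (rule sum.cong) (simp_all add: uE)
  have kr0: "lapply (dF 1) vl 0 + - (\<Sum>i\<in>{1..t}. lapply (mG i 1) (\<lambda>x. vr (i, x)) 0 * dF 1 (e0 i) 0) = 0"
    using kr[of "(0, 0)"] unfolding PH0_apply DB1_apply[OF vr] by simp
  have k0: "lapply (dF 1) u 0 = 0"
    unfolding split_E[OF fvec_finite[OF uf], of "dF 1" 0] offE sc using kr0
    by (simp add: c_def sum_negf)
  have ku: "lapply (dF 1) u = (\<lambda>_. 0)"
  proof
    fix j show "lapply (dF 1) u j = 0"
    proof (cases "j = 0")
      case True then show ?thesis using k0 by simp
    next
      case False
      have "lapply (dF 1) u \<in> fvec (BF 0)" using lapply_fvec[OF F_hom[of 1] uf] by simp
      then show ?thesis using False F0 fvec_out by fastforce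
    qed
  qed
  have "u \<in> {v \<in> fvec (BF 1). lapply (dF 1) v = (\<lambda>_. 0)}" using uf ku by simp
  from this[unfolded F_ex[rule_format, of 1, OF order.refl]] obtain w0
    where w0': "w0 \<in> fvec (BF (Suc 1))" and uw': "u = lapply (dF (Suc 1)) w0" by (rule imageE)
  have w0: "w0 \<in> fvec (BF 2)" and uw: "u = lapply (dF 2) w0" using w0' uw' unfolding s12 by simp_all
  have w0T: "w0 \<in> fvec (BT 1)" using w0' BTn[of 1] by simp
  define al where "al = (\<lambda>j. - w0 j)"
  have alf: "al \<in> fvec (BT 1)" unfolding al_def by (rule fvec_neg[OF w0T])
  have G1: "- lapply (DT 1) al a' = vl a'" for a'
    unfolding al_def lapply_neg DT1_apply uw[symmetric] using unE vlE by auto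
  define sl where "sl i = (\<lambda>x. vr (i, x) + lapply (q i 1) w0 x)" for i
  have "\<forall>i\<in>{1..t}. \<exists>g. g \<in> fvec (BG i (Suc 1)) \<and> lapply (mG i (Suc 1)) g = sl i"
  proof
    fix i assume i: "i \<in> {1..t}"
    have vri: "(\<lambda>x. vr (i, x)) \<in> fvec (BG i 1)" by (rule slice_fvec(1)[OF _ vr]) simp
    have qi: "lapply (q i 1) w0 \<in> fvec (BG i 1)" by (rule lapply_fvec[OF _ w0']) (use q_hom i in blast)
    have slf: "sl i \<in> fvec (BG i 1)" unfolding sl_def by (rule fvec_add[OF vri qi])
    have m1: "lapply (mG i 1) (\<lambda>x. vr (i, x)) \<in> fvec (BG i 0)"
      using lapply_fvec[OF G_hom[OF i order.refl] vri] by simp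
    have "lapply (mG i 1) (sl i) = (\<lambda>y. lapply (mG i 1) (\<lambda>x. vr (i, x)) y + lapply (mG i 1) (lapply (q i 1) w0) y)"
      unfolding sl_def by (rule lapply_add[OF fvec_finite[OF vri] fvec_finite[OF qi]])
    also have "\<dots> = (\<lambda>_. 0)"
    proof
      fix y
      have q1: "lapply (mG i 1) (lapply (q i 1) w0) = (\<lambda>c. if c = 0 then lapply (dF 2) w0 (e0 i) else 0)"
        using q_1 i w0 by blast
      show "lapply (mG i 1) (\<lambda>x. vr (i, x)) y + lapply (mG i 1) (lapply (q i 1) w0) y = 0"
      proof (cases "y = 0")
        case True
        then show ?thesis unfolding q1 uw[symmetric] using uE[OF i] by (simp add: c_def)
      next
        case False
        then have "lapply (mG i 1) (\<lambda>x. vr (i, x)) y = 0" using fvec_out[OF m1] G0 i by simp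
        then show ?thesis unfolding q1 using False by simp
      qed
    qed
    finally have "sl i \<in> {v \<in> fvec (BG i 1). lapply (mG i 1) v = (\<lambda>_. 0)}" using slf by simp
    from this[unfolded G_ex[rule_format, OF i order.refl]] obtain g
      where g: "g \<in> fvec (BG i (Suc 1))" "sl i = lapply (mG i (Suc 1)) g" by (rule imageE)
    then show "\<exists>g. g \<in> fvec (BG i (Suc 1)) \<and> lapply (mG i (Suc 1)) g = sl i"
      by (intro exI[of _ g]) simp
  qed
  then obtain gs where gs: "\<forall>i\<in>{1..t}. gs i \<in> fvec (BG i (Suc 1)) \<and> lapply (mG i (Suc 1)) (gs i) = sl i"
    by metis
  define br where "br = (\<lambda>c. if fst c \<in> {1..t} then gs (fst c) (snd c) else 0)"
  have brf: "br \<in> fvec (BB (Suc 1))" unfolding br_def by (rule glue_fvec) (use gs in auto)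
  have G2: "lapply (PH 1) al b' + lapply (DB (Suc 1)) br b' = vr b'" for b'
  proof -
    obtain i y :: nat where b': "b' = (i, y)" by (cases b')
    have d: "lapply (DB (Suc 1)) br (i, y) = lapply (mG i (Suc 1)) (\<lambda>x. br (i, x)) y"
      by (rule DBn_apply) (use fvec_finite[OF brf] in auto)
    show ?thesis
    proof (cases "i \<in> {1..t}")
      case True
      then have "(\<lambda>x. br (i, x)) = gs i" by (simp add: br_def)
      then have "lapply (DB (Suc 1)) br (i, y) = vr (i, y) + lapply (q i 1) w0 y"
        using d gs True by (simp add: sl_def)
      moreover have "lapply (PH 1) al (i, y) = - lapply (q i 1) w0 y"
      proof -
        have h1: "lapply (PH 1) al (i, y) = - lapply (PH 1) w0 (i, y)" unfolding al_def lapply_neg by simp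
        have h2: "lapply (PH 1) w0 (i, y) = lapply (q i 1) w0 y" using PHn_apply[of 1 w0] True by simp
        show ?thesis unfolding h1 h2 ..
      qed
      ultimately show ?thesis using b' by simp
    next
      case False
      then have "(\<lambda>x. br (i, x)) = (\<lambda>x. 0)" by (auto simp: br_def)
      then have "lapply (DB (Suc 1)) br (i, y) = 0" using d by (simp add: lapply_zero)
      moreover have "lapply (PH 1) al (i, y) = 0" using PHn_apply[of 1 al] False by auto
      moreover have "vr (i, y) = 0" using slice_fvec(2)[OF _ vr False] by (simp add: fun_eq_iff)
      ultimately show ?thesis using b' by simp
    qed
  qed
  show ?thesis using alf brf G1 G2 by blast
qed

lemma cone_exact:
  assumes n: "n \<ge> 1" and v: "v \<in> fvec (CB n)" and z: "lapply (CD n) v = (\<lambda>_. 0)"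
  shows "\<exists>w\<in>fvec (CB (Suc n)). lapply (CD (Suc n)) w = v"
proof -
  have vl: "(\<lambda>a. v (Inl a)) \<in> fvec (BT (n - 1))" and vr: "(\<lambda>b. v (Inr b)) \<in> fvec (BB n)"
    using fvec_split[OF v[unfolded cone_basis_alt]] n by auto
  have kr: "lapply (PH (n - 1)) (\<lambda>a. v (Inl a)) b' + lapply (DB n) (\<lambda>b. v (Inr b)) b' = 0" for b'
    by (rule cone_kernel(2)[OF fvec_finite[OF v] z])
  have ex: "\<exists>al\<in>fvec (BT n). \<exists>br\<in>fvec (BB (Suc n)). (\<forall>a'. - lapply (DT n) al a' = v (Inl a')) \<and>
      (\<forall>b'. lapply (PH n) al b' + lapply (DB (Suc n)) br b' = v (Inr b'))"
  proof (cases "n = 1")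
    case True
    have vl1: "(\<lambda>a. v (Inl a)) \<in> fvec (BF 1 - E)" using vl True BT0 by simp
    have vr1: "(\<lambda>b. v (Inr b)) \<in> fvec (BB 1)" using vr True by simp
    have kr1: "\<And>b'. lapply (PH 0) (\<lambda>a. v (Inl a)) b' + lapply (DB 1) (\<lambda>b. v (Inr b)) b' = 0"
      using kr True by simp
    show ?thesis using exact1[OF vl1 vr1 kr1] unfolding True .
  next
    case False
    then have n2: "n \<ge> 2" using n by simp
    have kl: "lapply (DT (n - 1)) (\<lambda>a. v (Inl a)) = (\<lambda>_. 0)"
      by (rule cone_kernel(1)[OF fvec_finite[OF v] z n2])
    have vlF: "(\<lambda>a. v (Inl a)) \<in> fvec (BF n)" using vl BTn[of "n - 1"] n2 by simp
    have klF: "lapply (dF n) (\<lambda>a. v (Inl a)) = (\<lambda>_. 0)"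
    proof (cases "n = 2")
      case True
      have a1: "(\<lambda>a. v (Inl a)) \<in> fvec (BF 2)" using vlF True by simp
      have a2: "(\<lambda>b. v (Inr b)) \<in> fvec (BB 2)" using vr True by simp
      have a3: "lapply (DT 1) (\<lambda>a. v (Inl a)) = (\<lambda>_. 0)" using kl True by simp
      have a4: "\<And>b'. lapply (PH 1) (\<lambda>a. v (Inl a)) b' + lapply (DB 2) (\<lambda>b. v (Inr b)) b' = 0"
        using kr True by simp
      show ?thesis using dd2_zero[OF a1 a2 a3 a4] True by simp
    next
      case False
      then have n3: "n - 1 \<ge> 2" using n2 by simp
      have "Suc (n - 1) = n" using n2 by simp
      then show ?thesis using kl unfolding DT_ge2[OF n3] by simp
    qed
    show ?thesis by (rule exact_ge2[OF n2 vlF vr klF kr])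
  qed
  then obtain al br where al: "al \<in> fvec (BT n)" and br: "br \<in> fvec (BB (Suc n))"
    and G1: "\<And>a'. - lapply (DT n) al a' = v (Inl a')"
    and G2: "\<And>b'. lapply (PH n) al b' + lapply (DB (Suc n)) br b' = v (Inr b')" by blast
  show ?thesis by (rule cone_lift[where BT=BT and BB=BB and DT=DT and DB=DB and phi=PH, OF n al br G1 G2])
qed

lemma CD1_apply:
  assumes v: "v \<in> fvec (CB 1)"
  shows "lapply (CD 1) v (Inr (0, 0)) = lapply (dF 1) (\<lambda>a. v (Inl a)) 0 +
      (\<Sum>i\<in>{1..t}. (- lapply (mG i 1) (\<lambda>x. v (Inr (i, x))) 0) * dF 1 (e0 i) 0)"
proof -
  have vr: "(\<lambda>b. v (Inr b)) \<in> fvec (BB 1)"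
    using fvec_split[OF v[unfolded cone_basis_alt]] by auto
  show ?thesis unfolding cone_apply[OF fvec_finite[OF v]]
    using DB1_apply[OF vr, of "(0, 0)"] by (simp add: PH0_apply sum_negf)
qed

lemma image_J: "{lapply (CD 1) v (Inr (0, 0)) |v. v \<in> fvec (CB 1)} = trim_J BF dF e0 t a"
proof
  show "{lapply (CD 1) v (Inr (0, 0)) |v. v \<in> fvec (CB 1)} \<subseteq> trim_J BF dF e0 t a"
  proof
    fix z assume "z \<in> {lapply (CD 1) v (Inr (0, 0)) |v. v \<in> fvec (CB 1)}"
    then obtain v where v: "v \<in> fvec (CB 1)" and z: "z = lapply (CD 1) v (Inr (0, 0))" by blast
    have vl: "(\<lambda>a. v (Inl a)) \<in> fvec (BF 1 - E)" and vr: "(\<lambda>b. v (Inr b)) \<in> fvec (BB 1)"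
      using fvec_split[OF v[unfolded cone_basis_alt]] BT0 by auto
    define y where "y i = (- lapply (mG i 1) (\<lambda>x. v (Inr (i, x))) 0) * dF 1 (e0 i) 0" for i
    have yi: "y i \<in> ideal_prod (a i) (ideal_gen {dF 1 (e0 i) 0})" if i: "i \<in> {1..t}" for i
    proof -
      have sl: "(\<lambda>x. v (Inr (i, x))) \<in> fvec (BG i 1)" using slice_fvec(1)[OF _ vr, of i] by simp
      have "lapply (mG i 1) (\<lambda>x. v (Inr (i, x))) 0 \<in> a i" using G_img i sl by blast
      then have "(- 1) * lapply (mG i 1) (\<lambda>x. v (Inr (i, x))) 0 \<in> a i"
        using a_ideal i unfolding is_ideal_def by blast
      then show ?thesis unfolding y_def by (intro ideal_prod_mem) simp
    qed
    show "z \<in> trim_J BF dF e0 t a" unfolding trim_J_def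
      using z CD1_apply[OF v] vl yi unfolding y_def[symmetric] by blast
  qed
  show "trim_J BF dF e0 t a \<subseteq> {lapply (CD 1) v (Inr (0, 0)) |v. v \<in> fvec (CB 1)}"
  proof
    fix z assume "z \<in> trim_J BF dF e0 t a"
    then obtain x y where z: "z = x + (\<Sum>i\<in>{1..t}. y i)"
      and x: "x \<in> {lapply (dF 1) v 0 |v. v \<in> fvec (BF 1 - E)}"
      and y: "\<forall>i\<in>{1..t}. y i \<in> ideal_prod (a i) (ideal_gen {dF 1 (e0 i) 0})"
      unfolding trim_J_def by blast
    obtain u where u: "u \<in> fvec (BF 1 - E)" and xu: "x = lapply (dF 1) u 0" using x by blast
    have "\<forall>i\<in>{1..t}. \<exists>g. g \<in> fvec (BG i 1) \<and> y i = (- lapply (mG i 1) g 0) * dF 1 (e0 i) 0"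
    proof
      fix i assume i: "i \<in> {1..t}"
      obtain r where r: "r \<in> a i" and yr: "y i = r * dF 1 (e0 i) 0"
        using ideal_prod_sub[OF a_ideal[rule_format, OF i]] y i by blast
      have "(- 1) * r \<in> a i" using a_ideal i r unfolding is_ideal_def by blast
      then have "- r \<in> {lapply (mG i 1) v 0 |v. v \<in> fvec (BG i 1)}" using G_img i by simp
      then obtain g where g1: "g \<in> fvec (BG i 1)" and g2: "- r = lapply (mG i 1) g 0" by blast
      have "r = - lapply (mG i 1) g 0" using g2 by (metis minus_minus)
      then show "\<exists>g. g \<in> fvec (BG i 1) \<and> y i = (- lapply (mG i 1) g 0) * dF 1 (e0 i) 0"
        using yr g1 by blast
    qed
    then obtain gs where gs: "\<forall>i\<in>{1..t}. gs i \<in> fvec (BG i 1) \<and> y i = (- lapply (mG i 1) (gs i) 0) * dF 1 (e0 i) 0"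
      by metis
    define br where "br = (\<lambda>c. if fst c \<in> {1..t} then gs (fst c) (snd c) else 0)"
    have brf: "br \<in> fvec (BB 1)" unfolding br_def by (rule glue_fvec) (use gs in auto)
    define v where "v = (\<lambda>c. case c of Inl j \<Rightarrow> u j | Inr b \<Rightarrow> br b)"
    have vf: "v \<in> fvec (CB 1)" unfolding cone_basis_alt
      by (rule fvec_join) (use u brf BT0 in \<open>simp_all add: v_def\<close>)
    have "lapply (CD 1) v (Inr (0, 0)) = z"
    proof -
      have "lapply (CD 1) v (Inr (0, 0)) = lapply (dF 1) u 0 +
          (\<Sum>i\<in>{1..t}. (- lapply (mG i 1) (\<lambda>x. br (i, x)) 0) * dF 1 (e0 i) 0)"
        using CD1_apply[OF vf] by (simp add: v_def)
      also have "(\<Sum>i\<in>{1..t}. (- lapply (mG i 1) (\<lambda>x. br (i, x)) 0) * dF 1 (e0 i) 0) = (\<Sum>i\<in>{1..t}. y i)"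
      proof (rule sum.cong)
        fix i assume i: "i \<in> {1..t}"
        then have "(\<lambda>x. br (i, x)) = gs i" by (simp add: br_def)
        then show "(- lapply (mG i 1) (\<lambda>x. br (i, x)) 0) * dF 1 (e0 i) 0 = y i" using gs i by simp
      qed simp
      finally show ?thesis using z xu by simp
    qed
    then show "z \<in> {lapply (CD 1) v (Inr (0, 0)) |v. v \<in> fvec (CB 1)}" using vf by blast
  qed
qed

end

theorem theorem3p4:
  fixes I :: "('v::finite, 'k::field) mpoly set"
    and BF :: "nat \<Rightarrow> nat set" and dF :: "nat \<Rightarrow> nat \<Rightarrow> nat \<Rightarrow> ('v, 'k) mpoly"
    and t :: nat and e0 :: "nat \<Rightarrow> nat"
    and a :: "nat \<Rightarrow> ('v, 'k) mpoly set"
    and BG :: "nat \<Rightarrow> nat \<Rightarrow> nat set" and mG :: "nat \<Rightarrow> nat \<Rightarrow> nat \<Rightarrow> nat \<Rightarrow> ('v, 'k) mpoly"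
    and q :: "nat \<Rightarrow> nat \<Rightarrow> nat \<Rightarrow> nat \<Rightarrow> ('v, 'k) mpoly"
  assumes I_homog: "homog_ideal I"
    and F_res: "homog_free_res BF dF I" and F0: "BF 0 = {0}"
    and e0_inj: "inj_on e0 {1..t}" and e0_basis: "e0 ` {1..t} \<subseteq> BF 1"
    and a_homog: "\<forall>i\<in>{1..t}. homog_ideal (a i)"
    and d0_a: "\<forall>i\<in>{1..t}. \<forall>v\<in>fvec (BF 2). lapply (dF 2) v (e0 i) \<in> a i"
    and G_res: "\<forall>i\<in>{1..t}. homog_free_res (BG i) (mG i) (a i) \<and> BG i 0 = {0}"
    and q_hom: "\<forall>i\<in>{1..t}. \<forall>k\<ge>1. is_hom (BF (Suc k)) (BG i k) (q i k)"
    and q_1: "\<forall>i\<in>{1..t}. \<forall>v\<in>fvec (BF 2).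
               lapply (mG i 1) (lapply (q i 1) v) = (\<lambda>c. if c = 0 then lapply (dF 2) v (e0 i) else 0)"
    and q_k: "\<forall>i\<in>{1..t}. \<forall>k\<ge>2. \<forall>v\<in>fvec (BF (Suc k)).
               lapply (mG i k) (lapply (q i k) v) = lapply (q i (k - 1)) (lapply (dF (Suc k)) v)"
  shows "chain_map (T_basis BF e0 t) (T_diff dF e0 t) (B_basis BG t) (B_diff mG dF e0) (trim_phi dF q t)
       \<and> free_res (cone_basis (T_basis BF e0 t) (B_basis BG t))
                  (cone_diff (T_diff dF e0 t) (B_diff mG dF e0) (trim_phi dF q t))
                  (trim_J BF dF e0 t a)"
proof -
  have Fr: "free_res BF dF I" by (rule conjunct1[OF F_res[unfolded homog_free_res_def]])
  have Gr: "\<forall>i\<in>{1..t}. free_res (BG i) (mG i) (a i)"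
  proof
    fix i assume i: "i \<in> {1..t}"
    show "free_res (BG i) (mG i) (a i)"
      using conjunct1[OF G_res[rule_format, OF i]] unfolding homog_free_res_def by (rule conjunct1)
  qed
  have G0': "\<forall>i\<in>{1..t}. BG i 0 = {0}"
  proof
    fix i assume i: "i \<in> {1..t}"
    show "BG i 0 = {0}" by (rule conjunct2[OF G_res[rule_format, OF i]])
  qed
  have fGimg: "\<forall>i\<in>{1..t}. {lapply (mG i 1) v 0 |v. v \<in> fvec (BG i 1)} = a i"
  proof
    fix i assume i: "i \<in> {1..t}"
    obtain b0 where b1: "BG i 0 = {b0}" and b2: "{lapply (mG i 1) v b0 |v. v \<in> fvec (BG i 1)} = a i"
      using conjunct1[OF conjunct2[OF Gr[rule_format, OF i, unfolded free_res_def]]] by (elim exE conjE)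
    have "b0 = 0" using b1 G0'[rule_format, OF i] by simp
    then show "{lapply (mG i 1) v 0 |v. v \<in> fvec (BG i 1)} = a i" using b2 by simp
  qed
  have fFcx: "free_complex BF dF" by (rule conjunct1[OF Fr[unfolded free_res_def]])
  have fFex: "\<forall>n\<ge>1. {v \<in> fvec (BF n). lapply (dF n) v = (\<lambda>_. 0)} = lapply (dF (Suc n)) ` fvec (BF (Suc n))"
    by (rule conjunct2[OF conjunct2[OF Fr[unfolded free_res_def]]])
  have fa: "\<forall>i\<in>{1..t}. is_ideal (a i)"
    by (intro ballI) (rule conjunct1[OF a_homog[rule_format, unfolded homog_ideal_def]])
  have fGcx: "\<forall>i\<in>{1..t}. free_complex (BG i) (mG i)"
    by (intro ballI) (rule conjunct1[OF Gr[rule_format, unfolded free_res_def]])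
  have fGex: "\<forall>i\<in>{1..t}. \<forall>n\<ge>1. {v \<in> fvec (BG i n). lapply (mG i n) v = (\<lambda>_. 0)} = lapply (mG i (Suc n)) ` fvec (BG i (Suc n))"
    by (intro ballI) (rule conjunct2[OF conjunct2[OF Gr[rule_format, unfolded free_res_def]]])
  interpret tr: trim BF dF t e0 a BG mG q
    by (rule trim.intro[OF fFcx fFex F0 e0_inj e0_basis fa fGcx fGex fGimg G0' q_hom q_1 q_k])
  let ?CB = "cone_basis (T_basis BF e0 t) (B_basis BG t)"
  let ?CD = "cone_diff (T_diff dF e0 t) (B_diff mG dF e0) (trim_phi dF q t)"
  have cx: "free_complex ?CB ?CD" by (rule tr.cone_cx)
  have ex: "\<forall>n\<ge>1. {v \<in> fvec (?CB n). lapply (?CD n) v = (\<lambda>_. 0)} = lapply (?CD (Suc n)) ` fvec (?CB (Suc n))"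
  proof (intro allI impI)
    fix n :: nat assume n: "1 \<le> n"
    show "{v \<in> fvec (?CB n). lapply (?CD n) v = (\<lambda>_. 0)} = lapply (?CD (Suc n)) ` fvec (?CB (Suc n))"
    proof
      show "{v \<in> fvec (?CB n). lapply (?CD n) v = (\<lambda>_. 0)} \<subseteq> lapply (?CD (Suc n)) ` fvec (?CB (Suc n))"
      proof
        fix v assume "v \<in> {v \<in> fvec (?CB n). lapply (?CD n) v = (\<lambda>_. 0)}"
        then have v: "v \<in> fvec (?CB n)" and z: "lapply (?CD n) v = (\<lambda>_. 0)" by auto
        obtain w where "w \<in> fvec (?CB (Suc n))" "lapply (?CD (Suc n)) w = v"
          using tr.cone_exact[OF n v z] by blast
        then show "v \<in> lapply (?CD (Suc n)) ` fvec (?CB (Suc n))" by blast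
      qed
      show "lapply (?CD (Suc n)) ` fvec (?CB (Suc n)) \<subseteq> {v \<in> fvec (?CB n). lapply (?CD n) v = (\<lambda>_. 0)}"
      proof
        fix z assume "z \<in> lapply (?CD (Suc n)) ` fvec (?CB (Suc n))"
        then obtain w where w: "w \<in> fvec (?CB (Suc n))" and zw: "z = lapply (?CD (Suc n)) w" by blast
        have h: "is_hom (?CB (Suc n)) (?CB (Suc n - 1)) (?CD (Suc n))"
          using conjunct1[OF cx[unfolded free_complex_def], rule_format, of "Suc n"] by simp
        have "z \<in> fvec (?CB n)" using lapply_fvec[OF h w] zw by simp
        moreover have "lapply (?CD n) z = (\<lambda>_. 0)"
          using conjunct2[OF cx[unfolded free_complex_def], rule_format, OF n w] zw by simp
        ultimately show "z \<in> {v \<in> fvec (?CB n). lapply (?CD n) v = (\<lambda>_. 0)}" by simp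
      qed
    qed
  qed
  have b0: "?CB 0 = {Inr (0, 0)}" by (simp add: cone_basis_def B_basis_def)
  show ?thesis unfolding free_res_def
  proof (intro conjI exI[of _ "Inr (0, 0)"])
    show "chain_map (T_basis BF e0 t) (T_diff dF e0 t) (B_basis BG t) (B_diff mG dF e0) (trim_phi dF q t)"
      by (rule tr.chain)
    show "free_complex ?CB ?CD" by (rule cx)
    show "?CB 0 = {Inr (0, 0)}" by (rule b0)
    show "{lapply (?CD 1) v (Inr (0, 0)) |v. v \<in> fvec (?CB 1)} = trim_J BF dF e0 t a" by (rule tr.image_J)
    show "\<forall>n\<ge>1. {v \<in> fvec (?CB n). lapply (?CD n) v = (\<lambda>_. 0)} = lapply (?CD (Suc n)) ` fvec (?CB (Suc n))"
      by (rule ex)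
  qed
qed

end
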